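(* Consider the symmetrical BSPR network with fixed $p_s,p_d\in[0,1/2)$ ($p_{s,i}=p_s$, $p_{i,d}=p_d$ for all $i$) and $K$ relays. Coded transmission with forwarding relays achieves every rate $R<R_\textnormal{coded,f}$, where $R_\textnormal{coded,f}=I(U;Y_1,\dots,Y_K)$ with $U$ uniform on $\{0,1\}$ and $Y_i=U\oplus Z_i\oplus E_i$, and $R_\textnormal{coded,f}-C\to0$ as $K\to\infty$, where $C$ is the capacity of the network with $K$ relays.
   Context: BSPR network with $K$ relays: at each network use $t$ the source sends $U[t]\in\{0,1\}$; relay $i$ receives $V_i[t]=U[t]\oplus Z_i[t]$, $\Pr\{Z_i=1\}=p_{s,i}$; relay $i$ sends $X_i[t]$ and the destination receives $Y_i[t]=X_i[t]\oplus E_i[t]$, $\Pr\{E_i=1\}=p_{i,d}$; all noises mutually independent and i.i.d. over time. An $(M,n)$ code: message $W$ uniform on $\{0,\dots,M-1\}$, source encoder on $W$, relay encoders $X_i[t]=f_{i,t}(V_i[1],\dots,V_i[t-1])$, destination decoder on all $Y_i$; rate $(\log_2M)/n$; average error probability $P_e$. $R$ is achievable if for every $\epsilon>0$ and all sufficiently large $n$ there is a $(2^{nR},n)$ code with $P_e\le\epsilon$; $C$ is the supremum of achievable rates. A forwarding relay sets $X_i[t]=V_i[t-1]$ ($X_i[1]=0$). Coded transmission with forwarding relays: all relays forward and the source uses a channel code for the effective point-to-point channel from $U$ to $(Y_1,\dots,Y_K)$ (with $n+1$ network uses for $n$ code symbols), the destination decoding from $(Y_1,\dots,Y_K)$. 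*)

theory Defs
  imports "HOL-Probability.Probability"
begin

text \<open>Network uses are indexed t = 0..n-1, relays i = 0..K-1.
 Booleans encode bits (True = 1), xor is inequality on bool.\<close>

definition noise :: "nat \<Rightarrow> nat \<Rightarrow> real \<Rightarrow> (nat \<times> nat \<Rightarrow> bool) pmf" where
  "noise K n p = Pi_pmf ({..<K} \<times> {..<n}) False (\<lambda>_. bernoulli_pmf p)"

text \<open>A code is given by: source encoder enc w t = U[t] for message w;
 relay encoders rel i t vs = X_i[t], where vs = [V_i[0],...,V_i[t-1]] (strictly causal);
 decoder dec applied to the list [Y_1,...,Y_K] of received sequences.\<close>

definition relay_in :: "(nat \<Rightarrow> nat \<Rightarrow> bool) \<Rightarrow> nat \<Rightarrow> (nat \<times> nat \<Rightarrow> bool) \<Rightarrow> nat \<Rightarrow> nat \<Rightarrow> bool" where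
  "relay_in enc w z i t = (enc w t \<noteq> z (i, t))"

definition relay_out :: "(nat \<Rightarrow> nat \<Rightarrow> bool list \<Rightarrow> bool) \<Rightarrow> (nat \<Rightarrow> nat \<Rightarrow> bool) \<Rightarrow> nat
    \<Rightarrow> (nat \<times> nat \<Rightarrow> bool) \<Rightarrow> nat \<Rightarrow> nat \<Rightarrow> bool" where
  "relay_out rel enc w z i t = rel i t (map (relay_in enc w z i) [0..<t])"

definition dest_obs :: "nat \<Rightarrow> nat \<Rightarrow> (nat \<Rightarrow> nat \<Rightarrow> bool list \<Rightarrow> bool) \<Rightarrow> (nat \<Rightarrow> nat \<Rightarrow> bool) \<Rightarrow> nat
    \<Rightarrow> (nat \<times> nat \<Rightarrow> bool) \<Rightarrow> (nat \<times> nat \<Rightarrow> bool) \<Rightarrow> bool list list" where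
  "dest_obs K n rel enc w z e =
     map (\<lambda>i. map (\<lambda>t. relay_out rel enc w z i t \<noteq> e (i, t)) [0..<n]) [0..<K]"

definition error_prob :: "nat \<Rightarrow> real \<Rightarrow> real \<Rightarrow> nat \<Rightarrow> nat \<Rightarrow> (nat \<Rightarrow> nat \<Rightarrow> bool)
    \<Rightarrow> (nat \<Rightarrow> nat \<Rightarrow> bool list \<Rightarrow> bool) \<Rightarrow> (bool list list \<Rightarrow> nat) \<Rightarrow> real" where
  "error_prob K ps pd n M enc rel dec =
     (\<Sum>w<M. measure_pmf.prob (pair_pmf (noise K n ps) (noise K n pd))
               {(z, e). dec (dest_obs K n rel enc w z e) \<noteq> w}) / real M"

definition achievable_with :: "nat \<Rightarrow> real \<Rightarrow> real \<Rightarrow> (nat \<Rightarrow> nat \<Rightarrow> bool list \<Rightarrow> bool) set \<Rightarrow> real \<Rightarrow> bool" where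
  "achievable_with K ps pd Rel R =
     (\<forall>\<epsilon>>0. \<exists>N. \<forall>n\<ge>N. \<exists>enc rel dec. rel \<in> Rel \<and>
        error_prob K ps pd n (nat \<lceil>2 powr (real n * R)\<rceil>) enc rel dec \<le> \<epsilon>)"

definition capacity :: "nat \<Rightarrow> real \<Rightarrow> real \<Rightarrow> real" where
  "capacity K ps pd = Sup {R. achievable_with K ps pd UNIV R}"

definition fwd_relay :: "nat \<Rightarrow> nat \<Rightarrow> bool list \<Rightarrow> bool" where
  "fwd_relay i t vs = (if vs = [] then False else last vs)"

definition mutual_info_pmf :: "('a \<times> 'b) pmf \<Rightarrow> real" where
  "mutual_info_pmf J = (\<Sum>ab\<in>set_pmf J. pmf J ab *
      log 2 (pmf J ab / (pmf (map_pmf fst J) (fst ab) * pmf (map_pmf snd J) (snd ab))))"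

definition coded_fwd_joint :: "nat \<Rightarrow> real \<Rightarrow> real \<Rightarrow> (bool \<times> bool list) pmf" where
  "coded_fwd_joint K ps pd =
     bind_pmf (bernoulli_pmf (1/2)) (\<lambda>u.
     bind_pmf (Pi_pmf {..<K} False (\<lambda>_. bernoulli_pmf ps)) (\<lambda>z.
     bind_pmf (Pi_pmf {..<K} False (\<lambda>_. bernoulli_pmf pd)) (\<lambda>e.
     return_pmf (u, map (\<lambda>i. (u \<noteq> z i) \<noteq> e i) [0..<K]))))"

definition R_coded_f :: "nat \<Rightarrow> real \<Rightarrow> real \<Rightarrow> real" where
  "R_coded_f K ps pd = mutual_info_pmf (coded_fwd_joint K ps pd)"

end

theory Submission
  imports Defs
begin


definition qb :: "real \<Rightarrow> bool \<Rightarrow> real" where "qb p b = (if b then p else 1 - p)"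

lemma sum_lists_prod:
  fixes f :: "nat \<Rightarrow> bool \<Rightarrow> real"
  shows
  "(\<Sum>ys\<in>{ys::bool list. length ys = K}. \<Prod>i<K. f i (ys!i)) = (\<Prod>i<K. f i True + f i False)"
proof (induction K arbitrary: f)
  case 0
  then show ?case by simp
next
  case (Suc K)
  have eq: "{ys::bool list. length ys = Suc K} = (\<lambda>(b,ys). b#ys) ` (UNIV \<times> {ys. length ys = K})"
    by (auto simp: length_Suc_conv image_iff)
  have inj: "inj_on (\<lambda>(b,ys). b#ys) (UNIV \<times> {ys::bool list. length ys = K})"
    by (auto simp: inj_on_def)
  have "(\<Sum>ys\<in>{ys::bool list. length ys = Suc K}. \<Prod>i<Suc K. f i (ys!i))
      = (\<Sum>(b,ys)\<in>UNIV \<times> {ys::bool list. length ys = K}. \<Prod>i<Suc K. f i ((b#ys)!i))"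
    unfolding eq by (subst sum.reindex[OF inj]) (simp add: case_prod_unfold)
  also have "\<dots> = (\<Sum>(b,ys)\<in>UNIV \<times> {ys::bool list. length ys = K}. f 0 b * (\<Prod>i<K. f (Suc i) (ys!i)))"
    by (intro sum.cong refl) (auto simp: prod.lessThan_Suc_shift simp del: prod.lessThan_Suc)
  also have "\<dots> = (\<Sum>b\<in>UNIV. f 0 b * (\<Sum>ys\<in>{ys::bool list. length ys = K}. (\<Prod>i<K. f (Suc i) (ys!i))))"
    by (simp add: sum.cartesian_product[symmetric] sum_distrib_left)
  also have "\<dots> = (\<Sum>b\<in>UNIV. f 0 b * (\<Prod>i<K. f (Suc i) True + f (Suc i) False))"
    using Suc.IH[of "\<lambda>i. f (Suc i)"] by simp
  also have "\<dots> = (\<Prod>i<Suc K. f i True + f i False)"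
    by (simp add: UNIV_bool prod.lessThan_Suc_shift algebra_simps del: prod.lessThan_Suc)
  finally show ?case .
qed

lemma power_mean:
  fixes a :: "'a \<Rightarrow> real"
  assumes "finite S" "\<And>j. j \<in> S \<Longrightarrow> a j \<ge> 0" "0 < \<rho>" "\<rho> \<le> 1"
  shows "(\<Sum>j\<in>S. a j powr \<rho>) \<le> real (card S) powr (1 - \<rho>) * (\<Sum>j\<in>S. a j) powr \<rho>"
proof (cases "S = {}")
  case True then show ?thesis by simp
next
  case False
  define n where "n = real (card S)"
  have n: "n > 0" using False assms(1) by (simp add: n_def card_gt_0_iff)
  define c where "c = (\<Sum>j\<in>S. a j) / n"
  have c0: "c \<ge> 0" using assms n by (auto simp: c_def intro!: sum_nonneg divide_nonneg_pos)
  show ?thesis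
  proof (cases "c = 0")
    case True
    then have "(\<Sum>j\<in>S. a j) = 0" using n by (simp add: c_def)
    then have "\<forall>j\<in>S. a j = 0" using assms sum_nonneg_eq_0_iff by blast
    then show ?thesis by simp
  next
    case False
    then have cp: "c > 0" using c0 by simp
    have bound: "a j powr \<rho> \<le> c powr \<rho> * (\<rho> * (a j / c) + (1 - \<rho>))" if j: "j \<in> S" for j
    proof (cases "a j = 0")
      case True then show ?thesis using assms cp by simp
    next
      case False
      then have aj: "a j / c > 0" using assms(2)[OF j] cp by simp
      have "(a j / c) powr \<rho> * 1 powr (1 - \<rho>) \<le> \<rho> * (a j / c) + (1 - \<rho>) * 1"
        by (rule Youngs_inequality_0) (use assms aj in auto)
      then have "(a j / c) powr \<rho> \<le> \<rho> * (a j / c) + (1 - \<rho>)" by simp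
      then have "c powr \<rho> * (a j / c) powr \<rho> \<le> c powr \<rho> * (\<rho> * (a j / c) + (1 - \<rho>))"
        by (simp add: mult_left_mono)
      moreover have "c powr \<rho> * (a j / c) powr \<rho> = a j powr \<rho>"
        using cp assms(2)[OF j] by (simp add: powr_divide)
      ultimately show ?thesis by simp
    qed
    have "(\<Sum>j\<in>S. a j powr \<rho>) \<le> (\<Sum>j\<in>S. c powr \<rho> * (\<rho> * (a j / c) + (1 - \<rho>)))"
      by (rule sum_mono) (rule bound)
    also have "\<dots> = c powr \<rho> * (\<rho> * ((\<Sum>j\<in>S. a j) / c) + (1 - \<rho>) * n)"
      by (simp add: sum_distrib_left sum.distrib sum_divide_distrib[symmetric] n_def
           flip: sum_distrib_left)
    also have "(\<Sum>j\<in>S. a j) / c = n" using n cp by (auto simp: c_def)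
    also have "c powr \<rho> * (\<rho> * n + (1 - \<rho>) * n) = c powr \<rho> * n" by (simp add: algebra_simps)
    also have "\<dots> = n powr (1 - \<rho>) * (\<Sum>j\<in>S. a j) powr \<rho>"
    proof -
      have "c powr \<rho> = (\<Sum>j\<in>S. a j) powr \<rho> / n powr \<rho>"
        unfolding c_def using n c0 by (simp add: powr_divide c_def)
      moreover have "n = n powr (1 - \<rho>) * n powr \<rho>" using n by (simp add: powr_add[symmetric])
      ultimately have "c powr \<rho> * n = n powr (1 - \<rho>) * (c powr \<rho> * n powr \<rho>)"
        by (metis mult.assoc mult.commute)
      also have "c powr \<rho> * n powr \<rho> = (\<Sum>j\<in>S. a j) powr \<rho>"
        using n by (simp add: \<open>c powr \<rho> = _\<close>)
      finally show ?thesis .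
    qed
    finally show ?thesis by (simp add: n_def)
  qed
qed




lemma sum_PiE_split:
  fixes F :: "'b \<Rightarrow> ('a \<Rightarrow> 'b) \<Rightarrow> real"
  assumes "finite I" "w \<in> I"
  shows "(\<Sum>C\<in>PiE I (\<lambda>_. X). F (C w) (restrict C (I - {w}))) = (\<Sum>x\<in>X. \<Sum>D\<in>PiE (I-{w}) (\<lambda>_. X). F x D)"
proof -
  have I: "insert w (I - {w}) = I" using assms by auto
  have eq: "PiE I (\<lambda>_. X) = (\<lambda>(y,g). g(w:=y)) ` (X \<times> PiE (I-{w}) (\<lambda>_. X))"
    using PiE_insert_eq[of w "I-{w}" "\<lambda>_. X"] I by simp
  have inj: "inj_on (\<lambda>(y,g). g(w:=y)) (X \<times> PiE (I-{w}) (\<lambda>_. X))"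
    by (rule inj_combinator) simp
  have r: "restrict (g(w:=y)) (I - {w}) = g" if "g \<in> PiE (I-{w}) (\<lambda>_. X)" for g y
    using that by (auto simp: fun_eq_iff PiE_def extensional_def restrict_def)
  have "(\<Sum>C\<in>PiE I (\<lambda>_. X). F (C w) (restrict C (I - {w})))
      = (\<Sum>(y,g)\<in>X \<times> PiE (I-{w}) (\<lambda>_. X). F y g)"
    unfolding eq by (subst sum.reindex[OF inj]) (auto intro!: sum.cong simp: r)
  also have "\<dots> = (\<Sum>x\<in>X. \<Sum>D\<in>PiE (I-{w}) (\<lambda>_. X). F x D)"
    by (rule sum.cartesian_product[symmetric])
  finally show ?thesis .
qed

lemma sum_PiE_single:
  fixes \<phi> :: "'b \<Rightarrow> real"
  assumes "finite I" "w \<in> I" "finite X"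
  shows "(\<Sum>C\<in>PiE I (\<lambda>_. X). \<phi> (C w)) = real (card X) ^ (card I - 1) * (\<Sum>x\<in>X. \<phi> x)"
proof -
  have "(\<Sum>C\<in>PiE I (\<lambda>_. X). \<phi> (C w)) = (\<Sum>x\<in>X. \<Sum>D\<in>PiE (I-{w}) (\<lambda>_. X). \<phi> x)"
    using sum_PiE_split[OF assms(1,2), of "\<lambda>x D. \<phi> x" X] by simp
  also have "\<dots> = (\<Sum>x\<in>X. real (card X) ^ (card I - 1) * \<phi> x)"
    using assms by (simp add: card_PiE)
  finally show ?thesis by (simp add: sum_distrib_left)
qed

lemma gal_alg:
  fixes N S \<rho> :: real and j :: nat
  assumes "N > 0" "S \<ge> 0" "j \<ge> 1" "0 < \<rho>"
  shows "S * (N ^ j) powr (1 - \<rho>) * (real j * N ^ (j - 1) * S) powr \<rho>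
       = N ^ (j + 1) * real j powr \<rho> * (S / N) powr (1 + \<rho>)"
proof -
  have e1: "(N ^ j) powr (1 - \<rho>) = N powr (real j * (1 - \<rho>))"
    using assms by (simp add: powr_powr flip: powr_realpow)
  have e2: "(real j * N ^ (j - 1) * S) powr \<rho> = real j powr \<rho> * N powr ((real j - 1) * \<rho>) * S powr \<rho>"
    using assms by (simp add: powr_mult powr_powr of_nat_diff flip: powr_realpow)
  have e3: "(S / N) powr (1 + \<rho>) = S powr (1 + \<rho>) / N powr (1 + \<rho>)"
    by (simp add: powr_divide)
  have e4: "S * S powr \<rho> = S powr (1 + \<rho>)"
    using assms by (simp add: powr_mult_base)
  have e5: "N ^ (j + 1) = N powr (real j + 1)"
    using powr_realpow[of N "j+1"] assms by (simp add: add.commute)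
  have e6: "N powr (real j * (1 - \<rho>)) * N powr ((real j - 1) * \<rho>) = N powr (real j + 1) / N powr (1 + \<rho>)"
    using assms by (simp add: powr_diff[symmetric] powr_add[symmetric] algebra_simps)
  show ?thesis
    unfolding e1 e2 e3 e5
    using e4 e6 by (simp add: field_simps)
qed




definition Wm :: "(bool \<Rightarrow> 'b \<Rightarrow> real) \<Rightarrow> nat \<Rightarrow> (nat \<Rightarrow> bool) \<Rightarrow> (nat \<Rightarrow> 'b) \<Rightarrow> real" where
  "Wm W m x g = (\<Prod>t<m. W (x t) (g t))"

definition mldec :: "(bool \<Rightarrow> 'b \<Rightarrow> real) \<Rightarrow> nat \<Rightarrow> nat \<Rightarrow> (nat \<Rightarrow> nat \<Rightarrow> bool) \<Rightarrow> (nat \<Rightarrow> 'b) \<Rightarrow> nat" where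
  "mldec W m M C g = (SOME w. w < M \<and> (\<forall>w'<M. Wm W m (C w') g \<le> Wm W m (C w) g))"

lemma mldec:
  assumes "M > 0"
  shows "mldec W m M C g < M \<and> (\<forall>w'<M. Wm W m (C w') g \<le> Wm W m (C (mldec W m M C g)) g)"
proof -
  define L where "L = (\<lambda>w. Wm W m (C w) g)"
  have "Max (L ` {..<M}) \<in> L ` {..<M}" using assms by (intro Max_in) auto
  then obtain w where w: "w < M" "L w = Max (L ` {..<M})" by auto
  have "\<forall>w'<M. L w' \<le> L w" using w by auto
  with w have "\<exists>w. w < M \<and> (\<forall>w'<M. L w' \<le> L w)" by blast
  then show ?thesis unfolding mldec_def L_def by (rule someI_ex)
qed

lemma Wm_nonneg: "(\<And>x y. W x y \<ge> 0) \<Longrightarrow> Wm W m x g \<ge> 0"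
  by (auto simp: Wm_def intro!: prod_nonneg)

lemma gal_pointwise:
  assumes W: "\<And>x y. W x y \<ge> 0" and w: "w < M" and \<rho>: "0 < \<rho>"
  shows "Wm W m (C w) g * (if mldec W m M C g \<noteq> w then 1 else 0)
     \<le> Wm W m (C w) g powr (1/(1+\<rho>)) * (\<Sum>w'\<in>{..<M}-{w}. Wm W m (C w') g powr (1/(1+\<rho>))) powr \<rho>"
proof (cases "mldec W m M C g = w")
  case True then show ?thesis by simp
next
  case False
  define s where "s = 1/(1+\<rho>)"
  have s: "s > 0" using \<rho> by (simp add: s_def)
  define d where "d = mldec W m M C g"
  from mldec[of M W m C g] w have d: "d < M" "Wm W m (C w) g \<le> Wm W m (C d) g"
    by (auto simp: d_def)
  define a where "a = Wm W m (C w) g"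
  have a0: "a \<ge> 0" by (simp add: a_def Wm_nonneg W)
  have "a powr s \<le> Wm W m (C d) g powr s" using d a0 s by (intro powr_mono2) (auto simp: a_def)
  also have "\<dots> \<le> (\<Sum>w'\<in>{..<M}-{w}. Wm W m (C w') g powr s)"
    using d False by (intro member_le_sum) (auto simp: d_def)
  finally have "(a powr s) powr \<rho> \<le> (\<Sum>w'\<in>{..<M}-{w}. Wm W m (C w') g powr s) powr \<rho>"
    using \<rho> by (intro powr_mono2) auto
  then have "a powr s * (a powr s) powr \<rho> \<le> a powr s * (\<Sum>w'\<in>{..<M}-{w}. Wm W m (C w') g powr s) powr \<rho>"
    by (intro mult_left_mono) auto
  moreover have "a powr s * (a powr s) powr \<rho> = a"
  proof -
    have "a powr s * (a powr s) powr \<rho> = a powr (s + s * \<rho>)"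
      by (simp add: powr_powr powr_add)
    also have "s + s * \<rho> = 1" using \<rho> by (simp add: s_def field_simps)
    finally show ?thesis using a0 by simp
  qed
  ultimately show ?thesis using False by (simp add: a_def s_def d_def)
qed

lemma gal_core:
  fixes \<phi> :: "(nat \<Rightarrow> bool) \<Rightarrow> real"
  assumes phi: "\<And>x. \<phi> x \<ge> 0" and \<rho>: "0 < \<rho>" "\<rho> \<le> 1" and w: "w < M"
    and Xs: "finite Xs" "Xs \<noteq> {}"
  shows "(\<Sum>C\<in>PiE {..<M} (\<lambda>_. Xs). \<phi> (C w) * (\<Sum>w'\<in>{..<M}-{w}. \<phi> (C w')) powr \<rho>)
     \<le> real (card Xs) ^ M * real (M - 1) powr \<rho> * ((\<Sum>x\<in>Xs. \<phi> x) / real (card Xs)) powr (1 + \<rho>)"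
proof -
  define J where "J = {..<M} - {w}"
  define N where "N = real (card Xs)"
  define S where "S = (\<Sum>x\<in>Xs. \<phi> x)"
  have N: "N > 0" using Xs by (simp add: N_def card_gt_0_iff)
  have S: "S \<ge> 0" unfolding S_def by (intro sum_nonneg phi)
  have cJ: "card J = M - 1" using w by (simp add: J_def)
  have finJ: "finite J" by (simp add: J_def)
  have "(\<Sum>C\<in>PiE {..<M} (\<lambda>_. Xs). \<phi> (C w) * (\<Sum>w'\<in>J. \<phi> (C w')) powr \<rho>)
      = (\<Sum>C\<in>PiE {..<M} (\<lambda>_. Xs). \<phi> (C w) * (\<Sum>w'\<in>J. \<phi> (restrict C J w')) powr \<rho>)"
    by (intro sum.cong refl arg_cong2[where f="(*)"] arg_cong2[where f="(powr)"] sum.cong) auto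
  also have "\<dots> = (\<Sum>x\<in>Xs. \<Sum>D\<in>PiE J (\<lambda>_. Xs). \<phi> x * (\<Sum>w'\<in>J. \<phi> (D w')) powr \<rho>)"
    unfolding J_def using w
    by (intro sum_PiE_split[of "{..<M}" w "\<lambda>x D. \<phi> x * (\<Sum>w'\<in>{..<M}-{w}. \<phi> (D w')) powr \<rho>"]) auto
  also have "\<dots> = S * (\<Sum>D\<in>PiE J (\<lambda>_. Xs). (\<Sum>w'\<in>J. \<phi> (D w')) powr \<rho>)"
    by (simp add: S_def sum_distrib_left sum_distrib_right sum.swap[of _ Xs])
  finally have eq1: "(\<Sum>C\<in>PiE {..<M} (\<lambda>_. Xs). \<phi> (C w) * (\<Sum>w'\<in>J. \<phi> (C w')) powr \<rho>)
      = S * (\<Sum>D\<in>PiE J (\<lambda>_. Xs). (\<Sum>w'\<in>J. \<phi> (D w')) powr \<rho>)" .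
  show ?thesis
  proof (cases "M = 1")
    case True
    then have "J = {}" using w by (auto simp: J_def)
    then have "S * (\<Sum>D\<in>PiE J (\<lambda>_. Xs). (\<Sum>w'\<in>J. \<phi> (D w')) powr \<rho>) = 0" by simp
    with eq1 have "(\<Sum>C\<in>PiE {..<M} (\<lambda>_. Xs). \<phi> (C w) * (\<Sum>w'\<in>J. \<phi> (C w')) powr \<rho>) = 0" by simp
    moreover have "0 \<le> real (card Xs) ^ M * real (M - 1) powr \<rho> * ((\<Sum>x\<in>Xs. \<phi> x) / real (card Xs)) powr (1 + \<rho>)"
      by simp
    ultimately show ?thesis unfolding J_def by linarith
  next
    case False
    define j where "j = M - 1"
    have j: "j \<ge> 1" "M = j + 1" using False w by (auto simp: j_def)
    have cardP: "card (PiE J (\<lambda>_. Xs)) = card Xs ^ j"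
      using finJ cJ by (simp add: card_PiE j_def)
    have inner: "(\<Sum>D\<in>PiE J (\<lambda>_. Xs). \<Sum>w'\<in>J. \<phi> (D w')) = real j * N ^ (j - 1) * S"
    proof -
      have "(\<Sum>D\<in>PiE J (\<lambda>_. Xs). \<Sum>w'\<in>J. \<phi> (D w')) = (\<Sum>w'\<in>J. \<Sum>D\<in>PiE J (\<lambda>_. Xs). \<phi> (D w'))"
        by (rule sum.swap)
      also have "\<dots> = (\<Sum>w'\<in>J. N ^ (j - 1) * S)"
        by (intro sum.cong refl) (use finJ Xs cJ in \<open>simp add: sum_PiE_single N_def S_def j_def\<close>)
      finally show ?thesis using cJ by (simp add: j_def)
    qed
    have "(\<Sum>D\<in>PiE J (\<lambda>_. Xs). (\<Sum>w'\<in>J. \<phi> (D w')) powr \<rho>)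
        \<le> real (card (PiE J (\<lambda>_. Xs))) powr (1 - \<rho>) * (\<Sum>D\<in>PiE J (\<lambda>_. Xs). \<Sum>w'\<in>J. \<phi> (D w')) powr \<rho>"
      using finJ Xs \<rho> by (intro power_mean) (auto intro!: sum_nonneg phi finite_PiE)
    also have "\<dots> = (N ^ j) powr (1 - \<rho>) * (real j * N ^ (j - 1) * S) powr \<rho>"
      unfolding inner cardP N_def by simp
    finally have "S * (\<Sum>D\<in>PiE J (\<lambda>_. Xs). (\<Sum>w'\<in>J. \<phi> (D w')) powr \<rho>)
        \<le> S * (N ^ j) powr (1 - \<rho>) * (real j * N ^ (j - 1) * S) powr \<rho>"
      using S by (simp add: mult_left_mono mult.assoc)
    also have "\<dots> = N ^ (j + 1) * real j powr \<rho> * (S / N) powr (1 + \<rho>)"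
      by (rule gal_alg) (use N S j \<rho> in auto)
    finally show ?thesis using eq1 j unfolding J_def N_def S_def j_def by simp
  qed
qed

lemma avg_Wm:
  fixes W :: "bool \<Rightarrow> 'b \<Rightarrow> real"
  assumes W: "\<And>x y. W x y \<ge> 0"
  shows "(\<Sum>x\<in>PiE {..<m} (\<lambda>_. UNIV). Wm W m x g powr s) / real (card (PiE {..<m} (\<lambda>_. UNIV::bool set)))
       = (\<Prod>t<m. \<Sum>x\<in>UNIV. 1/2 * W x (g t) powr s)"
proof -
  have "(\<Sum>x\<in>PiE {..<m} (\<lambda>_. UNIV). Wm W m x g powr s) = (\<Sum>x\<in>PiE {..<m} (\<lambda>_. UNIV). \<Prod>t<m. W (x t) (g t) powr s)"
    by (simp add: Wm_def prod_powr_distrib)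
  also have "\<dots> = (\<Prod>t<m. \<Sum>b\<in>UNIV. W b (g t) powr s)"
    by (rule prod_sum_PiE[symmetric]) auto
  finally have e: "(\<Sum>x\<in>PiE {..<m} (\<lambda>_. UNIV). Wm W m x g powr s) = (\<Prod>t<m. \<Sum>b\<in>UNIV. W b (g t) powr s)" .
  have c: "real (card (PiE {..<m} (\<lambda>_. UNIV::bool set))) = (\<Prod>t<m. 2)"
    by (simp add: card_PiE)
  have "(\<Prod>t<m. \<Sum>x\<in>UNIV. 1/2 * W x (g t) powr s) = (\<Prod>t<m. (\<Sum>b\<in>UNIV. W b (g t) powr s) / 2)"
    by (simp add: sum_divide_distrib)
  also have "\<dots> = (\<Prod>t<m. \<Sum>b\<in>UNIV. W b (g t) powr s) / (\<Prod>t<m. 2)"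
    by (rule prod_dividef)
  finally show ?thesis unfolding e c by simp
qed

lemma gallager:
  fixes W :: "bool \<Rightarrow> 'b \<Rightarrow> real" and B :: "'b set"
  assumes W: "\<And>x y. W x y \<ge> 0" and B: "finite B" and \<rho>: "0 < \<rho>" "\<rho> \<le> 1" and M: "M > 0"
  shows "\<exists>C. (\<Sum>w<M. \<Sum>g\<in>PiE {..<m} (\<lambda>_. B). Wm W m (C w) g * (if mldec W m M C g \<noteq> w then 1 else 0))
          \<le> real M * real (M - 1) powr \<rho> * (\<Sum>y\<in>B. (\<Sum>x\<in>UNIV. 1/2 * W x y powr (1/(1+\<rho>))) powr (1+\<rho>)) ^ m"
proof -
  define s where "s = 1/(1+\<rho>)"
  define Xs where "Xs = PiE {..<m} (\<lambda>_. UNIV::bool set)"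
  define Cs where "Cs = PiE {..<M} (\<lambda>_. Xs)"
  define Ys where "Ys = PiE {..<m} (\<lambda>_. B)"
  define N where "N = real (card Xs)"
  define A where "A = (\<lambda>g. (\<Sum>x\<in>Xs. Wm W m x g powr s) / N)"
  define T where "T = (\<lambda>C. \<Sum>w<M. \<Sum>g\<in>Ys. Wm W m (C w) g powr s * (\<Sum>w'\<in>{..<M}-{w}. Wm W m (C w') g powr s) powr \<rho>)"
  define bound where "bound = real M * real (M - 1) powr \<rho> * (\<Sum>g\<in>Ys. A g powr (1+\<rho>))"
  have finXs: "finite Xs" "Xs \<noteq> {}" by (auto simp: Xs_def intro!: finite_PiE)
  have finCs: "finite Cs" "Cs \<noteq> {}" using finXs by (auto simp: Cs_def PiE_eq_empty_iff intro!: finite_PiE)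
  have finYs: "finite Ys" using B by (auto simp: Ys_def intro!: finite_PiE)
  have cardCs: "real (card Cs) = N ^ M" by (simp add: Cs_def N_def card_PiE)
  have core: "(\<Sum>C\<in>Cs. Wm W m (C w) g powr s * (\<Sum>w'\<in>{..<M}-{w}. Wm W m (C w') g powr s) powr \<rho>)
      \<le> real (card Cs) * real (M - 1) powr \<rho> * A g powr (1 + \<rho>)" if "w < M" for w g
    unfolding Cs_def A_def N_def
    using gal_core[of "\<lambda>x. Wm W m x g powr s" \<rho> w M Xs] that \<rho> finXs
    by (simp add: card_PiE)
  have "(\<Sum>C\<in>Cs. T C) = (\<Sum>w<M. \<Sum>g\<in>Ys. \<Sum>C\<in>Cs. Wm W m (C w) g powr s * (\<Sum>w'\<in>{..<M}-{w}. Wm W m (C w') g powr s) powr \<rho>)"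
    unfolding T_def by (simp add: sum.swap[of _ Cs])
  also have "\<dots> \<le> (\<Sum>w<M. \<Sum>g\<in>Ys. real (card Cs) * real (M - 1) powr \<rho> * A g powr (1 + \<rho>))"
    by (intro sum_mono core) auto
  also have "\<dots> = real (card Cs) * bound"
    using M by (simp add: bound_def sum_distrib_left mult_ac of_nat_diff)
  finally have sumT: "(\<Sum>C\<in>Cs. T C) \<le> real (card Cs) * bound" .
  have "\<exists>C\<in>Cs. T C \<le> bound"
  proof (rule ccontr)
    assume "\<not> ?thesis"
    then have "\<And>C. C \<in> Cs \<Longrightarrow> bound < T C" by auto
    then have "(\<Sum>C\<in>Cs. bound) < (\<Sum>C\<in>Cs. T C)" using finCs by (intro sum_strict_mono) auto
    then show False using sumT by simp
  qed
  then obtain C where C: "T C \<le> bound" by blast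
  have "(\<Sum>w<M. \<Sum>g\<in>Ys. Wm W m (C w) g * (if mldec W m M C g \<noteq> w then 1 else 0)) \<le> T C"
    unfolding T_def s_def
    by (intro sum_mono gal_pointwise W \<rho>) auto
  also have "\<dots> \<le> bound" by (rule C)
  finally have fin: "(\<Sum>w<M. \<Sum>g\<in>Ys. Wm W m (C w) g * (if mldec W m M C g \<noteq> w then 1 else 0)) \<le> bound" .
  have eqA: "(\<Sum>g\<in>Ys. A g powr (1+\<rho>)) = (\<Sum>y\<in>B. (\<Sum>x\<in>UNIV. 1/2 * W x y powr s) powr (1+\<rho>)) ^ m"
  proof -
    have "(\<Sum>g\<in>Ys. A g powr (1+\<rho>)) = (\<Sum>g\<in>Ys. \<Prod>t<m. (\<Sum>x\<in>UNIV. 1/2 * W x (g t) powr s) powr (1+\<rho>))"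
      unfolding A_def N_def Xs_def using avg_Wm[where W=W and m=m and s=s, OF W]
      by (simp add: prod_powr_distrib)
    also have "\<dots> = (\<Prod>t<m. \<Sum>y\<in>B. (\<Sum>x\<in>UNIV. 1/2 * W x y powr s) powr (1+\<rho>))"
      unfolding Ys_def by (rule prod_sum_PiE[symmetric]) (use B in auto)
    finally show ?thesis by simp
  qed
  show ?thesis using fin unfolding bound_def eqA unfolding Ys_def s_def by blast
qed




lemma Pi_pmf_pair_combine:
  assumes A: "finite A" and c: "c d d = d"
  shows "map_pmf (\<lambda>(f,g) x. c (f x) (g x)) (pair_pmf (Pi_pmf A d P) (Pi_pmf A d Q))
       = Pi_pmf A d (\<lambda>x. map_pmf (\<lambda>(a,b). c a b) (pair_pmf (P x) (Q x)))"
proof -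
  have "Pi_pmf A d (\<lambda>x. map_pmf (\<lambda>(a,b). c a b) (pair_pmf (P x) (Q x)))
      = Pi_pmf A d (\<lambda>x. bind_pmf (P x) (\<lambda>a. bind_pmf (Q x) (\<lambda>b. return_pmf (c a b))))"
    by (simp add: pair_pmf_def map_pmf_def bind_assoc_pmf bind_return_pmf)
  also have "\<dots> = bind_pmf (Pi_pmf A d P) (\<lambda>f. Pi_pmf A d (\<lambda>x. bind_pmf (Q x) (\<lambda>b. return_pmf (c (f x) b))))"
    by (rule Pi_pmf_bind[OF A])
  also have "\<dots> = bind_pmf (Pi_pmf A d P) (\<lambda>f. bind_pmf (Pi_pmf A d Q) (\<lambda>g. Pi_pmf A d (\<lambda>x. return_pmf (c (f x) (g x)))))"
    by (subst Pi_pmf_bind[OF A]) (rule refl)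
  also have "\<dots> = bind_pmf (Pi_pmf A d P) (\<lambda>f. bind_pmf (Pi_pmf A d Q) (\<lambda>g. return_pmf (\<lambda>x. if x \<in> A then c (f x) (g x) else d)))"
    using A by simp
  also have "\<dots> = bind_pmf (Pi_pmf A d P) (\<lambda>f. bind_pmf (Pi_pmf A d Q) (\<lambda>g. return_pmf (\<lambda>x. c (f x) (g x))))"
  proof (intro bind_pmf_cong refl)
    fix f g assume f: "f \<in> set_pmf (Pi_pmf A d P)" and g: "g \<in> set_pmf (Pi_pmf A d Q)"
    have "\<And>x. x \<notin> A \<Longrightarrow> f x = d" "\<And>x. x \<notin> A \<Longrightarrow> g x = d"
      using set_Pi_pmf_subset[OF A, of d P] set_Pi_pmf_subset[OF A, of d Q] f g by auto
    then show "return_pmf (\<lambda>x. if x \<in> A then c (f x) (g x) else d) = return_pmf (\<lambda>x. c (f x) (g x))"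
      using c by (auto simp: fun_eq_iff)
  qed
  also have "\<dots> = map_pmf (\<lambda>(f,g) x. c (f x) (g x)) (pair_pmf (Pi_pmf A d P) (Pi_pmf A d Q))"
    by (simp add: pair_pmf_def map_pmf_def bind_assoc_pmf bind_return_pmf)
  finally show ?thesis ..
qed

definition pdef :: "real \<Rightarrow> real \<Rightarrow> real" where "pdef ps pd = ps * (1 - pd) + pd * (1 - ps)"

lemma xor_bern:
  assumes "0 \<le> ps" "ps \<le> 1" "0 \<le> pd" "pd \<le> 1"
  shows "map_pmf (\<lambda>(a,b). a \<noteq> b) (pair_pmf (bernoulli_pmf ps) (bernoulli_pmf pd)) = bernoulli_pmf (pdef ps pd)"
proof -
  have h: "0 \<le> (1-ps)*(1-pd)" "0 \<le> ps*pd" "0 \<le> ps*(1-pd)" "0 \<le> pd*(1-ps)" using assms by simp_all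
  have p: "0 \<le> pdef ps pd" "pdef ps pd \<le> 1" using h unfolding pdef_def
    by (simp_all add: algebra_simps)
  show ?thesis
  proof (rule pmf_eqI)
    fix b :: bool
    have "pmf (map_pmf (\<lambda>(a,b). a \<noteq> b) (pair_pmf (bernoulli_pmf ps) (bernoulli_pmf pd))) b
        = measure_pmf.prob (pair_pmf (bernoulli_pmf ps) (bernoulli_pmf pd)) {(x,y). (x \<noteq> y) = b}"
      by (simp add: pmf_map vimage_def case_prod_unfold)
    also have "{(x,y). (x \<noteq> y) = b} = (if b then {(True,False),(False,True)} else {(True,True),(False,False)})"
      by auto
    also have "measure_pmf.prob (pair_pmf (bernoulli_pmf ps) (bernoulli_pmf pd)) \<dots> = pmf (bernoulli_pmf (pdef ps pd)) b"
      using assms p by (cases b) (simp_all add: measure_measure_pmf_finite pmf_pair pdef_def algebra_simps)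
    finally show "pmf (map_pmf (\<lambda>(a,b). a \<noteq> b) (pair_pmf (bernoulli_pmf ps) (bernoulli_pmf pd))) b = pmf (bernoulli_pmf (pdef ps pd)) b" .
  qed
qed

definition Nf :: "nat \<Rightarrow> nat \<Rightarrow> (nat \<times> nat \<Rightarrow> bool) \<times> (nat \<times> nat \<Rightarrow> bool) \<Rightarrow> nat \<times> nat \<Rightarrow> bool" where
  "Nf K m ze = (\<lambda>(i,t). if i < K \<and> t < m then fst ze (i,t) \<noteq> snd ze (i, Suc t) else False)"

lemma noise_shift:
  assumes n: "n = Suc m"
  shows "map_pmf (\<lambda>e a. if a \<in> {..<K} \<times> {..<m} then e (fst a, Suc (snd a)) else False) (noise K n p)
       = Pi_pmf ({..<K} \<times> {..<m}) False (\<lambda>_. bernoulli_pmf p)"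
proof -
  define A' where "A' = {..<K} \<times> {1..<n}"
  define h where "h = (\<lambda>a::nat\<times>nat. (fst a, Suc (snd a)))"
  have bij: "bij_betw h ({..<K} \<times> {..<m}) A'"
  proof (rule bij_betwI')
    show "\<And>x y. x \<in> {..<K} \<times> {..<m} \<Longrightarrow> y \<in> {..<K} \<times> {..<m} \<Longrightarrow> (h x = h y) = (x = y)"
      by (auto simp: h_def prod_eq_iff)
    show "\<And>x. x \<in> {..<K} \<times> {..<m} \<Longrightarrow> h x \<in> A'" by (auto simp: h_def A'_def n)
    show "\<And>y. y \<in> A' \<Longrightarrow> \<exists>x\<in>{..<K} \<times> {..<m}. y = h x"
    proof -
      fix y assume "y \<in> A'"
      then obtain i t where y: "y = (i,t)" "i < K" "1 \<le> t" "t < n" by (cases y) (auto simp: A'_def)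
      then have "(i, t - 1) \<in> {..<K} \<times> {..<m}" "y = h (i, t - 1)" by (auto simp: n h_def)
      then show "\<exists>x\<in>{..<K} \<times> {..<m}. y = h x" by blast
    qed
  qed
  have out: "\<And>x. x \<notin> {..<K} \<times> {..<m} \<Longrightarrow> h x \<notin> A'" by (auto simp: h_def A'_def n)
  have "Pi_pmf ({..<K} \<times> {..<m}) False (\<lambda>_. bernoulli_pmf p) = map_pmf (\<lambda>g. g \<circ> h) (Pi_pmf A' False (\<lambda>_. bernoulli_pmf p))"
    by (rule Pi_pmf_bij_betw[OF _ bij out]) simp
  also have "Pi_pmf A' False (\<lambda>_. bernoulli_pmf p) = map_pmf (\<lambda>f x. if x \<in> A' then f x else False) (noise K n p)"
    unfolding noise_def by (rule Pi_pmf_subset) (auto simp: A'_def)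
  also have "map_pmf (\<lambda>g. g \<circ> h) (map_pmf (\<lambda>f x. if x \<in> A' then f x else False) (noise K n p))
     = map_pmf (\<lambda>e a. if a \<in> {..<K} \<times> {..<m} then e (fst a, Suc (snd a)) else False) (noise K n p)"
    by (simp add: map_pmf_comp) (intro map_pmf_cong refl, auto simp: fun_eq_iff h_def A'_def n)
  finally show ?thesis ..
qed

lemma noise_Nf:
  assumes n: "n = Suc m" and p: "0 \<le> ps" "ps \<le> 1" "0 \<le> pd" "pd \<le> 1"
  shows "map_pmf (Nf K m) (pair_pmf (noise K n ps) (noise K n pd))
       = Pi_pmf ({..<K} \<times> {..<m}) False (\<lambda>_. bernoulli_pmf (pdef ps pd))"
proof -
  define Am where "Am = {..<K} \<times> {..<m}"
  define R where "R = (\<lambda>z (a::nat\<times>nat). if a \<in> Am then z a else False)"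
  define S where "S = (\<lambda>e (a::nat\<times>nat). if a \<in> Am then e (fst a, Suc (snd a)) else False)"
  have "Nf K m = (\<lambda>(f,g) x. f x \<noteq> g x) \<circ> (\<lambda>(a,b). (R a, S b))"
    by (auto simp: fun_eq_iff Nf_def R_def S_def Am_def)
  then have "map_pmf (Nf K m) (pair_pmf (noise K n ps) (noise K n pd))
      = map_pmf (\<lambda>(f,g) x. f x \<noteq> g x) (pair_pmf (map_pmf R (noise K n ps)) (map_pmf S (noise K n pd)))"
    by (simp add: map_pmf_compose map_pair)
  also have "map_pmf R (noise K n ps) = Pi_pmf Am False (\<lambda>_. bernoulli_pmf ps)"
    unfolding R_def noise_def Am_def by (rule Pi_pmf_subset[symmetric]) (auto simp: n)
  also have "map_pmf S (noise K n pd) = Pi_pmf Am False (\<lambda>_. bernoulli_pmf pd)"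
    unfolding S_def Am_def by (rule noise_shift[OF n])
  also have "map_pmf (\<lambda>(f,g) x. f x \<noteq> g x) (pair_pmf (Pi_pmf Am False (\<lambda>_. bernoulli_pmf ps)) (Pi_pmf Am False (\<lambda>_. bernoulli_pmf pd)))
     = Pi_pmf Am False (\<lambda>_. map_pmf (\<lambda>(a,b). a \<noteq> b) (pair_pmf (bernoulli_pmf ps) (bernoulli_pmf pd)))"
    by (rule Pi_pmf_pair_combine) (auto simp: Am_def)
  also have "\<dots> = Pi_pmf Am False (\<lambda>_. bernoulli_pmf (pdef ps pd))"
    using xor_bern[OF p] by simp
  finally show ?thesis by (simp add: Am_def)
qed

definition Gof :: "nat \<Rightarrow> nat \<Rightarrow> bool list list \<Rightarrow> nat \<Rightarrow> bool list" where
  "Gof K m obs = (\<lambda>t\<in>{..<m}. map (\<lambda>i. obs!i!(Suc t)) [0..<K])"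

definition Gmap :: "nat \<Rightarrow> nat \<Rightarrow> (nat \<Rightarrow> bool) \<Rightarrow> (nat \<times> nat \<Rightarrow> bool) \<Rightarrow> nat \<Rightarrow> bool list" where
  "Gmap K m x N = (\<lambda>t\<in>{..<m}. map (\<lambda>i. x t \<noteq> N (i,t)) [0..<K])"

definition Wch :: "nat \<Rightarrow> real \<Rightarrow> bool \<Rightarrow> bool list \<Rightarrow> real" where
  "Wch K p x y = (\<Prod>i<K. qb p (y!i \<noteq> x))"

lemma fwd_out: "relay_out fwd_relay enc w z i (Suc t) = relay_in enc w z i t"
  unfolding relay_out_def fwd_relay_def by (simp del: upt_Suc add: upt_Suc_append)

lemma obs_nth: "i < K \<Longrightarrow> t < n \<Longrightarrow> dest_obs K n rel enc w z e ! i ! t = (relay_out rel enc w z i t \<noteq> e (i, t))"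
  unfolding dest_obs_def by (simp del: upt_Suc)

lemma obs_eq:
  assumes n: "n = Suc m"
  shows "Gof K m (dest_obs K n fwd_relay enc w z e) = Gmap K m (enc w) (Nf K m (z,e))"
  unfolding Gof_def Gmap_def
proof (intro restrict_ext)
  fix t assume t: "t \<in> {..<m}"
  show "map (\<lambda>i. dest_obs K n fwd_relay enc w z e ! i ! Suc t) [0..<K] = map (\<lambda>i. enc w t \<noteq> Nf K m (z, e) (i, t)) [0..<K]"
  proof (rule map_cong[OF refl])
    fix i assume i: "i \<in> set [0..<K]"
    then show "dest_obs K n fwd_relay enc w z e ! i ! Suc t = (enc w t \<noteq> Nf K m (z, e) (i, t))"
      using t n by (simp del: upt_Suc add: obs_nth fwd_out relay_in_def Nf_def) blast
  qed
qed

lemma qb_bern: "0 \<le> p \<Longrightarrow> p \<le> 1 \<Longrightarrow> pmf (bernoulli_pmf p) b = qb p b"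
  by (cases b) (auto simp: qb_def)

lemma prob_Pi_Gmap:
  assumes p: "0 \<le> p" "p \<le> 1"
  shows "measure_pmf.prob (Pi_pmf ({..<K} \<times> {..<m}) False (\<lambda>_. bernoulli_pmf p)) {N. P (Gmap K m x N)}
     = (\<Sum>g\<in>PiE {..<m} (\<lambda>_. {ys. length ys = K}). Wm (Wch K p) m x g * (if P g then 1 else 0))"
proof -
  define Am where "Am = {..<K} \<times> {..<m}"
  define M where "M = Pi_pmf Am False (\<lambda>_. bernoulli_pmf p)"
  define SP where "SP = PiE_dflt Am False (\<lambda>_. UNIV::bool set)"
  define Ys where "Ys = PiE {..<m} (\<lambda>_. {ys::bool list. length ys = K})"
  have finAm: "finite Am" by (simp add: Am_def)
  have finSP: "finite SP" unfolding SP_def using finAm by (intro finite_PiE_dflt) auto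
  have setM: "set_pmf M \<subseteq> SP" unfolding M_def SP_def using set_Pi_pmf_subset[OF finAm, of False "\<lambda>_. bernoulli_pmf p"]
    by (auto simp: PiE_dflt_def)
  have "measure_pmf.prob M {N. P (Gmap K m x N)} = measure_pmf.prob M ({N. P (Gmap K m x N)} \<inter> SP)"
  proof -
    have "measure_pmf.prob M {N. P (Gmap K m x N)} = measure_pmf.prob M ({N. P (Gmap K m x N)} \<inter> set_pmf M)"
      by (simp add: measure_Int_set_pmf)
    also have "{N. P (Gmap K m x N)} \<inter> set_pmf M = ({N. P (Gmap K m x N)} \<inter> SP) \<inter> set_pmf M"
      using setM by blast
    also have "measure_pmf.prob M \<dots> = measure_pmf.prob M ({N. P (Gmap K m x N)} \<inter> SP)"
      by (simp add: measure_Int_set_pmf)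
    finally show ?thesis .
  qed
  also have "\<dots> = (\<Sum>N\<in>{N. P (Gmap K m x N)} \<inter> SP. pmf M N)"
    using finSP by (simp add: measure_measure_pmf_finite)
  also have "\<dots> = (\<Sum>N\<in>SP. pmf M N * (if P (Gmap K m x N) then 1 else 0))"
    using finSP by (simp add: sum.inter_restrict Int_commute mult.commute if_distrib cong: if_cong)
  also have "\<dots> = (\<Sum>N\<in>SP. Wm (Wch K p) m x (Gmap K m x N) * (if P (Gmap K m x N) then 1 else 0))"
  proof (intro sum.cong refl arg_cong2[where f="(*)"])
    fix N assume N: "N \<in> SP"
    have "pmf M N = (\<Prod>a\<in>Am. qb p (N a))"
      unfolding M_def using N finAm p by (subst pmf_Pi') (auto simp: SP_def PiE_dflt_def qb_bern)
    also have "\<dots> = (\<Prod>i<K. \<Prod>t<m. qb p (N (i,t)))"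
      unfolding Am_def by (simp add: prod.cartesian_product)
    also have "\<dots> = (\<Prod>t<m. \<Prod>i<K. qb p (N (i,t)))"
      by (rule prod.swap)
    also have "\<dots> = Wm (Wch K p) m x (Gmap K m x N)"
      unfolding Wm_def Wch_def Gmap_def by (intro prod.cong refl) (auto intro!: arg_cong[where f="qb p"])
    finally show "pmf M N = Wm (Wch K p) m x (Gmap K m x N)" .
  qed
  also have "\<dots> = (\<Sum>g\<in>Ys. Wm (Wch K p) m x g * (if P g then 1 else 0))"
  proof (rule sum.reindex_bij_betw)
    show "bij_betw (Gmap K m x) SP Ys"
    proof (rule bij_betwI')
      fix N1 N2 assume N1: "N1 \<in> SP" and N2: "N2 \<in> SP"
      show "(Gmap K m x N1 = Gmap K m x N2) = (N1 = N2)"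
      proof
        assume eq: "Gmap K m x N1 = Gmap K m x N2"
        show "N1 = N2"
        proof
          fix a :: "nat \<times> nat"
          obtain i t where a: "a = (i,t)" by (cases a)
          show "N1 a = N2 a"
          proof (cases "i < K \<and> t < m")
            case True
            have "Gmap K m x N1 t ! i = Gmap K m x N2 t ! i" using eq by simp
            then show ?thesis using True by (simp add: Gmap_def a) blast
          next
            case False
            then show ?thesis using N1 N2 by (auto simp: SP_def PiE_dflt_def Am_def a)
          qed
        qed
      qed simp
    next
      fix N assume "N \<in> SP"
      show "Gmap K m x N \<in> Ys" by (auto simp: Gmap_def Ys_def)
    next
      fix g assume g: "g \<in> Ys"
      define N where "N = (\<lambda>(i,t). if i < K \<and> t < m then x t \<noteq> g t ! i else False)"
      have "N \<in> SP" by (auto simp: N_def SP_def PiE_dflt_def Am_def)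
      moreover have "g = Gmap K m x N"
      proof
        fix t show "g t = Gmap K m x N t"
        proof (cases "t < m")
          case True
          then have "length (g t) = K" using g by (auto simp: Ys_def)
          then show ?thesis using True by (auto simp: Gmap_def N_def intro: nth_equalityI)
        next
          case False
          then show ?thesis using g by (auto simp: Gmap_def Ys_def PiE_def extensional_def)
        qed
      qed
      ultimately show "\<exists>N\<in>SP. g = Gmap K m x N" by blast
    qed
  qed
  finally show ?thesis by (simp add: M_def Am_def Ys_def)
qed

lemma network_prob:
  assumes n: "n = Suc m" and p: "0 \<le> ps" "ps \<le> 1" "0 \<le> pd" "pd \<le> 1"
  shows "measure_pmf.prob (pair_pmf (noise K n ps) (noise K n pd)) {(z,e). P (Gof K m (dest_obs K n fwd_relay enc w z e))}
     = (\<Sum>g\<in>PiE {..<m} (\<lambda>_. {ys. length ys = K}). Wm (Wch K (pdef ps pd)) m (enc w) g * (if P g then 1 else 0))"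
proof -
  have pp: "0 \<le> pdef ps pd" "pdef ps pd \<le> 1"
  proof -
    have h: "0 \<le> (1-ps)*(1-pd)" "0 \<le> ps*pd" "0 \<le> ps*(1-pd)" "0 \<le> pd*(1-ps)" using p by simp_all
    show "0 \<le> pdef ps pd" "pdef ps pd \<le> 1" using h unfolding pdef_def by (simp_all add: algebra_simps)
  qed
  have "{(z,e). P (Gof K m (dest_obs K n fwd_relay enc w z e))} = Nf K m -` {N. P (Gmap K m (enc w) N)}"
    using obs_eq[OF n] by auto
  then have "measure_pmf.prob (pair_pmf (noise K n ps) (noise K n pd)) {(z,e). P (Gof K m (dest_obs K n fwd_relay enc w z e))}
      = measure_pmf.prob (map_pmf (Nf K m) (pair_pmf (noise K n ps) (noise K n pd))) {N. P (Gmap K m (enc w) N)}"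
    by (simp add: measure_map_pmf)
  also have "\<dots> = measure_pmf.prob (Pi_pmf ({..<K} \<times> {..<m}) False (\<lambda>_. bernoulli_pmf (pdef ps pd))) {N. P (Gmap K m (enc w) N)}"
    by (simp add: noise_Nf[OF n p])
  finally show ?thesis using prob_Pi_Gmap[OF pp] by simp
qed




lemma pdef_bounds:
  assumes "0 \<le> ps" "ps \<le> 1" "0 \<le> pd" "pd \<le> 1"
  shows "0 \<le> pdef ps pd" "pdef ps pd \<le> 1"
proof -
  have h: "0 \<le> (1-ps)*(1-pd)" "0 \<le> ps*pd" "0 \<le> ps*(1-pd)" "0 \<le> pd*(1-ps)" using assms by simp_all
  show "0 \<le> pdef ps pd" "pdef ps pd \<le> 1" using h unfolding pdef_def by (simp_all add: algebra_simps)
qed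

lemma coded_eq:
  assumes p: "0 \<le> ps" "ps \<le> 1" "0 \<le> pd" "pd \<le> 1"
  shows "coded_fwd_joint K ps pd = bind_pmf (bernoulli_pmf (1/2)) (\<lambda>u.
           map_pmf (\<lambda>N. (u, map (\<lambda>i. u \<noteq> N i) [0..<K])) (Pi_pmf {..<K} False (\<lambda>_. bernoulli_pmf (pdef ps pd))))"
  unfolding coded_fwd_joint_def
proof (intro bind_pmf_cong refl)
  fix u :: bool
  have "bind_pmf (Pi_pmf {..<K} False (\<lambda>_. bernoulli_pmf ps)) (\<lambda>z. bind_pmf (Pi_pmf {..<K} False (\<lambda>_. bernoulli_pmf pd))
          (\<lambda>e. return_pmf (u, map (\<lambda>i. (u \<noteq> z i) \<noteq> e i) [0..<K])))
      = map_pmf (\<lambda>N. (u, map (\<lambda>i. u \<noteq> N i) [0..<K])) (map_pmf (\<lambda>(f,g) x. f x \<noteq> g x)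
          (pair_pmf (Pi_pmf {..<K} False (\<lambda>_. bernoulli_pmf ps)) (Pi_pmf {..<K} False (\<lambda>_. bernoulli_pmf pd))))"
    apply (simp add: pair_pmf_def map_pmf_def bind_assoc_pmf bind_return_pmf)
    apply (intro bind_pmf_cong refl arg_cong[where f=return_pmf] arg_cong2[where f=Pair] map_cong)
    apply blast
    done
  also have "map_pmf (\<lambda>(f,g) x. f x \<noteq> g x)
          (pair_pmf (Pi_pmf {..<K} False (\<lambda>_. bernoulli_pmf ps)) (Pi_pmf {..<K} False (\<lambda>_. bernoulli_pmf pd)))
       = Pi_pmf {..<K} False (\<lambda>_. map_pmf (\<lambda>(a,b). a \<noteq> b) (pair_pmf (bernoulli_pmf ps) (bernoulli_pmf pd)))"
    by (rule Pi_pmf_pair_combine) auto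
  also have "\<dots> = Pi_pmf {..<K} False (\<lambda>_. bernoulli_pmf (pdef ps pd))"
    by (simp only: xor_bern[OF p])
  finally show "bind_pmf (Pi_pmf {..<K} False (\<lambda>_. bernoulli_pmf ps)) (\<lambda>z. bind_pmf (Pi_pmf {..<K} False (\<lambda>_. bernoulli_pmf pd))
          (\<lambda>e. return_pmf (u, map (\<lambda>i. (u \<noteq> z i) \<noteq> e i) [0..<K])))
      = map_pmf (\<lambda>N. (u, map (\<lambda>i. u \<noteq> N i) [0..<K])) (Pi_pmf {..<K} False (\<lambda>_. bernoulli_pmf (pdef ps pd)))" .
qed

lemma pmf_map_inj_SP:
  assumes fin: "finite SP" and sub: "set_pmf M \<subseteq> SP" and inj: "inj_on f SP" and x: "x \<in> SP"
  shows "pmf (map_pmf f M) (f x) = pmf M x"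
proof -
  have "pmf (map_pmf f M) (f x) = measure_pmf.prob M (f -` {f x})" by (simp add: pmf_map)
  also have "\<dots> = measure_pmf.prob M (f -` {f x} \<inter> set_pmf M)" by (simp add: measure_Int_set_pmf)
  also have "f -` {f x} \<inter> set_pmf M = {x} \<inter> set_pmf M" using inj x sub by (auto simp: inj_on_def)
  also have "measure_pmf.prob M \<dots> = pmf M x" by (simp add: measure_Int_set_pmf measure_pmf_single)
  finally show ?thesis .
qed

lemma pmf_map_out_SP:
  assumes sub: "set_pmf M \<subseteq> SP" and y: "y \<notin> f ` SP"
  shows "pmf (map_pmf f M) y = 0"
proof -
  have "y \<notin> set_pmf (map_pmf f M)" using assms by auto
  then show ?thesis by (meson set_pmf_iff)
qed

lemma pmf_L:
  assumes p: "0 \<le> p" "p \<le> 1"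
  shows "pmf (map_pmf (\<lambda>N. map (\<lambda>i. u \<noteq> N i) [0..<K]) (Pi_pmf {..<K} False (\<lambda>_. bernoulli_pmf p))) y
        = (if length y = K then Wch K p u y else 0)"
proof -
  define SP where "SP = PiE_dflt {..<K} False (\<lambda>_. UNIV::bool set)"
  define f where "f = (\<lambda>N. map (\<lambda>i. u \<noteq> N i) [0..<K])"
  have finSP: "finite SP" unfolding SP_def by (intro finite_PiE_dflt) auto
  have sub: "set_pmf (Pi_pmf {..<K} False (\<lambda>_. bernoulli_pmf p)) \<subseteq> SP"
    using set_Pi_pmf_subset[of "{..<K}" False "\<lambda>_. bernoulli_pmf p"] by (auto simp: SP_def PiE_dflt_def)
  have inj: "inj_on f SP"
  proof
    fix N1 N2 assume N1: "N1 \<in> SP" and N2: "N2 \<in> SP" and eq: "f N1 = f N2"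
    show "N1 = N2"
    proof
      fix i show "N1 i = N2 i"
      proof (cases "i < K")
        case True
        then have "f N1 ! i = f N2 ! i" using eq by simp
        then show ?thesis using True by (simp add: f_def) blast
      next
        case False then show ?thesis using N1 N2 by (auto simp: SP_def PiE_dflt_def)
      qed
    qed
  qed
  show ?thesis
  proof (cases "length y = K")
    case True
    define N0 where "N0 = (\<lambda>i. if i < K then u \<noteq> y ! i else False)"
    have N0: "N0 \<in> SP" by (auto simp: SP_def PiE_dflt_def N0_def)
    have fy: "f N0 = y" using True by (auto simp: f_def N0_def intro: nth_equalityI)
    have "pmf (map_pmf f (Pi_pmf {..<K} False (\<lambda>_. bernoulli_pmf p))) (f N0) = pmf (Pi_pmf {..<K} False (\<lambda>_. bernoulli_pmf p)) N0"
      by (rule pmf_map_inj_SP[OF finSP sub inj N0])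
    also have "\<dots> = (\<Prod>i<K. qb p (N0 i))"
      by (subst pmf_Pi') (auto simp: N0_def qb_bern p)
    also have "\<dots> = Wch K p u y"
      unfolding Wch_def N0_def by (intro prod.cong refl) (auto intro!: arg_cong[where f="qb p"])
    finally show ?thesis using True fy f_def by simp
  next
    case False
    have "y \<notin> f ` SP" using False by (auto simp: f_def)
    then show ?thesis using pmf_map_out_SP[OF sub] False f_def by simp
  qed
qed

definition Wbar :: "nat \<Rightarrow> real \<Rightarrow> bool list \<Rightarrow> real" where
  "Wbar K p y = 1/2 * Wch K p True y + 1/2 * Wch K p False y"

lemma pmf_coded:
  assumes p: "0 \<le> ps" "ps \<le> 1" "0 \<le> pd" "pd \<le> 1"
  shows "pmf (coded_fwd_joint K ps pd) (u, y) = (if length y = K then 1/2 * Wch K (pdef ps pd) u y else 0)"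
proof -
  have pp: "0 \<le> pdef ps pd" "pdef ps pd \<le> 1" using pdef_bounds[OF p] by auto
  have pm: "pmf (map_pmf (\<lambda>N. (u', map (\<lambda>i. u' \<noteq> N i) [0..<K])) M) (u, y)
      = (if u = u' then pmf (map_pmf (\<lambda>N. map (\<lambda>i. u' \<noteq> N i) [0..<K]) M) y else 0)" for u' M
  proof -
    have "map_pmf (\<lambda>N. (u', map (\<lambda>i. u' \<noteq> N i) [0..<K])) M = map_pmf (Pair u') (map_pmf (\<lambda>N. map (\<lambda>i. u' \<noteq> N i) [0..<K]) M)"
      by (simp add: map_pmf_comp)
    moreover have "pmf (map_pmf (Pair u') M') (u, y) = (if u = u' then pmf M' y else 0)" for M' :: "bool list pmf"
    proof (cases "u = u'")
      case True then show ?thesis by (simp add: pmf_map_inj' inj_on_def)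
    next
      case False then show ?thesis by (simp add: pmf_map vimage_def)
    qed
    ultimately show ?thesis by simp
  qed
  define \<Phi> where "\<Phi> = (\<lambda>u. map_pmf (\<lambda>N. (u, map (\<lambda>i. u \<noteq> N i) [0..<K])) (Pi_pmf {..<K} False (\<lambda>_. bernoulli_pmf (pdef ps pd))))"
  have "pmf (coded_fwd_joint K ps pd) (u, y) = (\<integral>u'. pmf (\<Phi> u') (u, y) \<partial>bernoulli_pmf (1/2))"
    unfolding coded_eq[OF p] pmf_bind \<Phi>_def ..
  also have "\<dots> = pmf (\<Phi> True) (u, y) * (1/2) + pmf (\<Phi> False) (u, y) * (1 - 1/2)"
    by (rule integral_bernoulli_pmf) auto
  also have "\<dots> = (if length y = K then 1/2 * Wch K (pdef ps pd) u y else 0)"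
    unfolding \<Phi>_def pm pmf_L[OF pp] by (cases u) auto
  finally show ?thesis .
qed

lemma fst_marg:
  assumes p: "0 \<le> ps" "ps \<le> 1" "0 \<le> pd" "pd \<le> 1"
  shows "pmf (map_pmf fst (coded_fwd_joint K ps pd)) u = 1/2"
proof -
  have "map_pmf fst (coded_fwd_joint K ps pd) = bernoulli_pmf (1/2)"
    unfolding coded_eq[OF p] by (simp add: map_bind_pmf map_pmf_comp bind_return_pmf')
  then show ?thesis by simp
qed

lemma snd_marg:
  assumes p: "0 \<le> ps" "ps \<le> 1" "0 \<le> pd" "pd \<le> 1"
  shows "pmf (map_pmf snd (coded_fwd_joint K ps pd)) y = (if length y = K then Wbar K (pdef ps pd) y else 0)"
proof -
  have "snd -` {y} = {(True, y), (False, y)}" by auto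
  then have "pmf (map_pmf snd (coded_fwd_joint K ps pd)) y = measure_pmf.prob (coded_fwd_joint K ps pd) {(True, y), (False, y)}"
    by (simp add: pmf_map)
  also have "\<dots> = pmf (coded_fwd_joint K ps pd) (True, y) + pmf (coded_fwd_joint K ps pd) (False, y)"
    by (simp add: measure_measure_pmf_finite)
  finally show ?thesis by (simp add: pmf_coded[OF p] Wbar_def)
qed

definition Ifun :: "nat \<Rightarrow> real \<Rightarrow> real" where
  "Ifun K p = (\<Sum>u\<in>UNIV. \<Sum>y\<in>{ys::bool list. length ys = K}. 1/2 * Wch K p u y * log 2 (Wch K p u y / Wbar K p y))"

lemma Rcf_eq:
  assumes p: "0 \<le> ps" "ps \<le> 1" "0 \<le> pd" "pd \<le> 1"
  shows "R_coded_f K ps pd = Ifun K (pdef ps pd)"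
proof -
  define J where "J = coded_fwd_joint K ps pd"
  define F where "F = (\<lambda>ab. pmf J ab * log 2 (pmf J ab / (pmf (map_pmf fst J) (fst ab) * pmf (map_pmf snd J) (snd ab))))"
  define Bs where "Bs = {ys::bool list. length ys = K}"
  have finB: "finite Bs" unfolding Bs_def using finite_lists_length_eq[of "UNIV::bool set" K] by simp
  have sub: "set_pmf J \<subseteq> UNIV \<times> Bs"
  proof
    fix ab assume "ab \<in> set_pmf J"
    then have "pmf J ab \<noteq> 0" by (simp add: set_pmf_iff)
    then show "ab \<in> UNIV \<times> Bs" unfolding J_def Bs_def
      by (cases ab) (auto simp: pmf_coded[OF p] split: if_splits)
  qed
  have "R_coded_f K ps pd = (\<Sum>ab\<in>set_pmf J. F ab)"
    by (simp add: R_coded_f_def mutual_info_pmf_def J_def F_def)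
  also have "\<dots> = (\<Sum>ab\<in>UNIV \<times> Bs. F ab)"
    using sub finB by (intro sum.mono_neutral_left) (auto simp: F_def set_pmf_iff)
  also have "\<dots> = (\<Sum>u\<in>UNIV. \<Sum>y\<in>Bs. F (u, y))"
    by (simp add: sum.cartesian_product)
  also have "\<dots> = Ifun K (pdef ps pd)"
    unfolding Ifun_def Bs_def
    by (intro sum.cong refl) (simp add: F_def J_def pmf_coded[OF p] fst_marg[OF p] snd_marg[OF p])
  finally show ?thesis .
qed




lemma qb_nonneg: "0 \<le> p \<Longrightarrow> p \<le> 1 \<Longrightarrow> qb p b \<ge> 0"
  by (simp add: qb_def)

lemma Wch_nonneg: "0 \<le> p \<Longrightarrow> p \<le> 1 \<Longrightarrow> Wch K p x y \<ge> 0"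
  by (auto simp: Wch_def intro!: prod_nonneg qb_nonneg)

lemma Wbar_nonneg: "0 \<le> p \<Longrightarrow> p \<le> 1 \<Longrightarrow> Wbar K p y \<ge> 0"
  by (simp add: Wbar_def Wch_nonneg)

lemma sum_Wch: "(\<Sum>y\<in>{ys::bool list. length ys = K}. Wch K p u y) = 1"
proof -
  have "(\<Sum>y\<in>{ys::bool list. length ys = K}. Wch K p u y) = (\<Prod>i<K. qb p (True \<noteq> u) + qb p (False \<noteq> u))"
    unfolding Wch_def by (rule sum_lists_prod)
  also have "\<dots> = 1" by (cases u) (simp_all add: qb_def)
  finally show ?thesis .
qed

lemma sum_Wbar: "(\<Sum>y\<in>{ys::bool list. length ys = K}. Wbar K p y) = 1"
  by (simp add: Wbar_def sum.distrib sum_divide_distrib[symmetric] sum_Wch)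

lemma sqrt_prod: "sqrt (\<Prod>i\<in>A. f i) = (\<Prod>i\<in>A. sqrt (f i))"
  by (induction A rule: infinite_finite_induct) (auto simp: real_sqrt_mult)

lemma sum_sqrt_W: 
  assumes "0 \<le> p" "p \<le> 1"
  shows "(\<Sum>y\<in>{ys::bool list. length ys = K}. sqrt (Wch K p True y * Wch K p False y)) = (2 * sqrt (p * (1 - p))) ^ K"
proof -
  have "(\<Sum>y\<in>{ys::bool list. length ys = K}. sqrt (Wch K p True y * Wch K p False y))
      = (\<Sum>y\<in>{ys::bool list. length ys = K}. \<Prod>i<K. sqrt (qb p (y!i \<noteq> True) * qb p (y!i \<noteq> False)))"
    unfolding Wch_def by (simp add: prod.distrib[symmetric] sqrt_prod)
  also have "\<dots> = (\<Prod>i<K. sqrt (qb p (True \<noteq> True) * qb p (True \<noteq> False)) + sqrt (qb p (False \<noteq> True) * qb p (False \<noteq> False)))"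
    by (rule sum_lists_prod)
  also have "\<dots> = (2 * sqrt (p * (1 - p))) ^ K" by (simp add: qb_def algebra_simps)
  finally show ?thesis .
qed

lemma log_1p_sqrt: "0 \<le> x \<Longrightarrow> log 2 (1 + x) \<le> 2 * sqrt x / ln 2"
proof -
  assume x: "0 \<le> x"
  have "1 + x \<le> (1 + sqrt x)^2" using x by (simp add: power2_eq_square algebra_simps)
  then have "ln (1 + x) \<le> ln ((1 + sqrt x)^2)" using x by (intro ln_mono) auto
  also have "\<dots> = 2 * ln (1 + sqrt x)" using x by (simp add: ln_realpow)
  also have "\<dots> \<le> 2 * sqrt x" using ln_add_one_self_le_self[of "sqrt x"] x by simp
  finally show ?thesis by (simp add: log_def divide_right_mono)
qed

lemma Ifun_lower:
  assumes p: "0 \<le> p" "p \<le> 1"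
  shows "1 - Ifun K p \<le> 2 / ln 2 * (2 * sqrt (p * (1 - p))) ^ K"
proof -
  define Bs where "Bs = {ys::bool list. length ys = K}"
  define W where "W = Wch K p"
  have W0: "\<And>u y. W u y \<ge> 0" using Wch_nonneg[OF p] by (simp add: W_def)
  have one: "(\<Sum>u\<in>UNIV. \<Sum>y\<in>Bs. 1/2 * W u y) = 1"
    using sum_Wch[of K p] by (simp add: Bs_def W_def UNIV_bool sum_divide_distrib[symmetric])
  have tbound: "1/2 * W u y - 1/2 * W u y * log 2 (W u y / Wbar K p y) \<le> sqrt (W u y * W (\<not>u) y) / ln 2" for u y
  proof (cases "W u y = 0")
    case True then show ?thesis by simp
  next
    case False
    then have Wp: "W u y > 0" using W0[of u y] by linarith
    have Wb: "Wbar K p y = (W u y + W (\<not>u) y) / 2" by (cases u) (simp_all add: Wbar_def W_def)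
    have W'0: "W (\<not>u) y \<ge> 0" by (rule W0)
    have Wbp: "Wbar K p y > 0" using Wp W'0 Wb by simp
    have e1: "1 + W (\<not>u) y / W u y = 2 * Wbar K p y / W u y" using Wp by (simp add: Wb field_simps)
    have "1 - log 2 (W u y / Wbar K p y) = log 2 (1 + W (\<not>u) y / W u y)"
      unfolding e1 using Wp Wbp by (simp add: log_divide log_mult)
    then have "1/2 * W u y - 1/2 * W u y * log 2 (W u y / Wbar K p y) = 1/2 * W u y * log 2 (1 + W (\<not>u) y / W u y)"
    proof -
      have "1/2 * W u y - 1/2 * W u y * log 2 (W u y / Wbar K p y) = 1/2 * W u y * (1 - log 2 (W u y / Wbar K p y))"
        by (simp add: algebra_simps)
      then show ?thesis using \<open>1 - log 2 (W u y / Wbar K p y) = _\<close> by simp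
    qed
    also have "\<dots> \<le> 1/2 * W u y * (2 * sqrt (W (\<not>u) y / W u y) / ln 2)"
      using Wp W'0 by (intro mult_left_mono log_1p_sqrt) auto
    also have "\<dots> = sqrt (W u y * W (\<not>u) y) / ln 2"
    proof -
      have "sqrt (W u y * W (\<not>u) y) = sqrt ((W u y)^2 * (W (\<not>u) y / W u y))"
        using Wp by (simp add: power2_eq_square)
      also have "\<dots> = sqrt ((W u y)^2) * sqrt (W (\<not>u) y / W u y)" by (rule real_sqrt_mult)
      also have "\<dots> = W u y * sqrt (W (\<not>u) y / W u y)" using Wp by simp
      finally have "W u y * sqrt (W (\<not>u) y / W u y) = sqrt (W u y * W (\<not>u) y)" ..
      then show ?thesis by simp
    qed
    finally show ?thesis .
  qed
  have "1 - Ifun K p = (\<Sum>u\<in>UNIV. \<Sum>y\<in>Bs. 1/2 * W u y - 1/2 * W u y * log 2 (W u y / Wbar K p y))"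
  proof -
    have "1 - Ifun K p = (\<Sum>u\<in>UNIV. \<Sum>y\<in>Bs. 1/2 * W u y) - (\<Sum>u\<in>UNIV. \<Sum>y\<in>Bs. 1/2 * W u y * log 2 (W u y / Wbar K p y))"
      by (simp only: one) (simp add: Ifun_def Bs_def W_def)
    also have "\<dots> = (\<Sum>u\<in>UNIV. \<Sum>y\<in>Bs. 1/2 * W u y - 1/2 * W u y * log 2 (W u y / Wbar K p y))"
      by (simp add: sum_subtractf)
    finally show ?thesis .
  qed
  also have "\<dots> \<le> (\<Sum>u\<in>UNIV. \<Sum>y\<in>Bs. sqrt (W u y * W (\<not>u) y) / ln 2)"
    by (intro sum_mono tbound)
  also have "\<dots> = 2 / ln 2 * (\<Sum>y\<in>Bs. sqrt (W True y * W False y))"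
  proof -
    have "\<And>y. W False y * W True y = W True y * W False y" by simp
    then show ?thesis by (simp add: UNIV_bool sum_divide_distrib[symmetric]) (simp add: mult.commute)
  qed
  also have "\<dots> = 2 / ln 2 * (2 * sqrt (p * (1 - p))) ^ K"
    unfolding Bs_def W_def using sum_sqrt_W[OF p] by simp
  finally show ?thesis .
qed




definition Eg :: "nat \<Rightarrow> real \<Rightarrow> real \<Rightarrow> real" where
  "Eg K p \<rho> = (\<Sum>y\<in>{ys::bool list. length ys = K}. (\<Sum>x\<in>UNIV. 1/2 * Wch K p x y powr (1/(1+\<rho>))) powr (1+\<rho>))"

lemma deriv_inv1: "((\<lambda>\<rho>::real. 1/(1+\<rho>)) has_real_derivative -1) (at 0)"
proof -
  have d1: "((\<lambda>\<rho>::real. 1 + \<rho>) has_real_derivative 0 + 1) (at 0)"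
    by (intro DERIV_add DERIV_const DERIV_ident)
  have "((\<lambda>\<rho>::real. inverse (1+\<rho>)) has_real_derivative - (inverse (1+0) * (0 + 1) * inverse (1+0))) (at 0)"
    by (rule DERIV_inverse'[OF d1]) simp
  then show ?thesis by (simp add: inverse_eq_divide)
qed

lemma deriv_c:
  fixes c :: real
  assumes "c \<ge> 0"
  shows "((\<lambda>\<rho>. c powr (1/(1+\<rho>))) has_real_derivative -(c * ln c)) (at 0)"
proof (cases "c = 0")
  case True then show ?thesis by simp
next
  case False
  then have c: "c > 0" using assms by simp
  have "((\<lambda>\<rho>. c powr (1/(1+\<rho>))) has_real_derivative (c powr (1/(1+0))) * ((-1) * ln c + 0 * (1/(1+0)) / c)) (at 0)"
    by (rule DERIV_powr[OF DERIV_const c deriv_inv1])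
  then show ?thesis using c by simp
qed

lemma deriv_term:
  assumes p: "0 \<le> p" "p \<le> 1"
  shows "((\<lambda>\<rho>. (\<Sum>x\<in>UNIV. 1/2 * Wch K p x y powr (1/(1+\<rho>))) powr (1+\<rho>)) has_real_derivative
          Wbar K p y * ln (Wbar K p y) + (\<Sum>x\<in>UNIV. 1/2 * -(Wch K p x y * ln (Wch K p x y)))) (at 0)"
proof -
  define a where "a = (\<lambda>\<rho>. \<Sum>x\<in>UNIV. 1/2 * Wch K p x y powr (1/(1+\<rho>)))"
  define a' where "a' = (\<Sum>x\<in>UNIV. 1/2 * -(Wch K p x y * ln (Wch K p x y)))"
  have W0: "\<And>x. Wch K p x y \<ge> 0" using Wch_nonneg[OF p] by simp
  have da: "(a has_real_derivative a') (at 0)"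
    unfolding a_def a'_def by (intro DERIV_sum DERIV_cmult deriv_c W0)
  have a0: "a 0 = Wbar K p y" using W0 by (simp add: a_def Wbar_def UNIV_bool)
  show ?thesis
  proof (cases "Wbar K p y = 0")
    case True
    then have "Wch K p True y = 0" "Wch K p False y = 0" using W0[of True] W0[of False] by (auto simp: Wbar_def)
    then show ?thesis using True by (simp add: UNIV_bool)
  next
    case False
    then have pos: "a 0 > 0" using a0 Wbar_nonneg[OF p, of K y] by simp
    have "((\<lambda>\<rho>. a \<rho> powr (1+\<rho>)) has_real_derivative (a 0 powr (1+0)) * (1 * ln (a 0) + a' * (1+0) / a 0)) (at 0)"
      by (rule DERIV_powr[OF da pos]) (auto intro!: derivative_eq_intros)
    then have "((\<lambda>\<rho>. a \<rho> powr (1+\<rho>)) has_real_derivative Wbar K p y * ln (Wbar K p y) + a') (at 0)"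
      by (rule DERIV_cong) (use pos a0 in \<open>simp add: algebra_simps\<close>)
    then show ?thesis unfolding a_def a'_def .
  qed
qed

lemma Eg0: "0 \<le> p \<Longrightarrow> p \<le> 1 \<Longrightarrow> Eg K p 0 = 1"
proof -
  assume p: "0 \<le> p" "p \<le> 1"
  have "Eg K p 0 = (\<Sum>y\<in>{ys::bool list. length ys = K}. Wbar K p y)"
    unfolding Eg_def by (intro sum.cong refl) (simp add: UNIV_bool Wbar_def Wch_nonneg[OF p] algebra_simps)
  then show ?thesis using sum_Wbar[of K p] by simp
qed

lemma D_eq:
  assumes p: "0 \<le> p" "p \<le> 1"
  shows "(\<Sum>y\<in>{ys::bool list. length ys = K}. Wbar K p y * ln (Wbar K p y) + (\<Sum>x\<in>UNIV. 1/2 * -(Wch K p x y * ln (Wch K p x y))))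
       = - ln 2 * Ifun K p"
proof -
  have tm: "Wbar K p y * ln (Wbar K p y) + (\<Sum>x\<in>UNIV. 1/2 * -(Wch K p x y * ln (Wch K p x y)))
      = - ln 2 * (\<Sum>u\<in>UNIV. 1/2 * Wch K p u y * log 2 (Wch K p u y / Wbar K p y))" for y
  proof -
    have one: "1/2 * Wch K p u y * log 2 (Wch K p u y / Wbar K p y) * ln 2
       = 1/2 * Wch K p u y * ln (Wch K p u y) - 1/2 * Wch K p u y * ln (Wbar K p y)" for u
    proof (cases "Wch K p u y = 0")
      case True then show ?thesis by simp
    next
      case False
      then have wp: "Wch K p u y > 0" using Wch_nonneg[OF p, of K u y] by simp
      then have "Wbar K p y > 0" using Wch_nonneg[OF p, of K "\<not>u" y] by (cases u) (auto simp: Wbar_def)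
      moreover have "ln (2::real) > 0" by simp
      ultimately show ?thesis using wp by (simp add: log_def ln_div field_simps)
    qed
    have "- ln 2 * (\<Sum>u\<in>UNIV. 1/2 * Wch K p u y * log 2 (Wch K p u y / Wbar K p y))
        = - (\<Sum>u\<in>UNIV. 1/2 * Wch K p u y * log 2 (Wch K p u y / Wbar K p y) * ln 2)"
      by (simp add: sum_distrib_left sum_distrib_right mult.commute sum_negf)
    also have "\<dots> = - (\<Sum>u\<in>UNIV. 1/2 * Wch K p u y * ln (Wch K p u y) - 1/2 * Wch K p u y * ln (Wbar K p y))"
      by (simp only: one)
    also have "\<dots> = Wbar K p y * ln (Wbar K p y) + (\<Sum>x\<in>UNIV. 1/2 * -(Wch K p x y * ln (Wch K p x y)))"
      by (simp add: UNIV_bool Wbar_def algebra_simps)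
    finally show ?thesis ..
  qed
  show ?thesis
    unfolding tm Ifun_def by (simp add: sum_distrib_left sum.swap[of _ UNIV])
qed

lemma exists_rho:
  assumes p: "0 \<le> p" "p \<le> 1" and R: "R < Ifun K p"
  shows "\<exists>\<rho>. 0 < \<rho> \<and> \<rho> \<le> 1 \<and> Eg K p \<rho> * 2 powr (\<rho> * R) < 1"
proof -
  define F where "F = (\<lambda>\<rho>. Eg K p \<rho> * 2 powr (\<rho> * R))"
  have dE: "(Eg K p has_real_derivative - ln 2 * Ifun K p) (at 0)"
    unfolding Eg_def D_eq[OF p, symmetric] by (intro DERIV_sum deriv_term[OF p])
  have d2: "((\<lambda>\<rho>. 2 powr (\<rho> * R)) has_real_derivative R * ln 2) (at 0)"
  proof -
    have "((\<lambda>\<rho>. 2 powr (\<rho> * R)) has_real_derivative (2 powr (0 * R)) * (R * ln 2 + 0 * (0 * R) / 2)) (at 0)"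
      by (rule DERIV_powr[OF DERIV_const]) (auto intro!: derivative_eq_intros)
    then show ?thesis by simp
  qed
  have "(F has_real_derivative (- ln 2 * Ifun K p) * 2 powr (0 * R) + R * ln 2 * Eg K p 0) (at 0)"
    unfolding F_def by (rule DERIV_mult[OF dE d2])
  then have dF: "(F has_real_derivative ln 2 * (R - Ifun K p)) (at 0)"
    by (simp add: Eg0[OF p] algebra_simps)
  have "ln 2 * (R - Ifun K p) < 0" using R by (simp add: mult_pos_neg)
  from DERIV_neg_dec_right[OF dF this] obtain d where d: "d > 0" "\<And>h. h > 0 \<Longrightarrow> h < d \<Longrightarrow> F 0 > F (0 + h)"
    by blast
  define \<rho> where "\<rho> = min (d/2) 1"
  have "F \<rho> < F 0" using d by (auto simp: \<rho>_def)
  moreover have "F 0 = 1" by (simp add: F_def Eg0[OF p])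
  ultimately show ?thesis using d by (intro exI[of _ \<rho>]) (auto simp: \<rho>_def F_def)
qed




lemma obs_trunc:
  "dest_obs K n rel enc w z e = dest_obs K n rel (\<lambda>_ t. if t < n then enc w t else False) 0 z e"
  unfolding dest_obs_def relay_out_def relay_in_def
  by (intro map_cong refl arg_cong2[where f="(\<noteq>)"] arg_cong[where f="rel _ _"]) auto

lemma prob_sum_le1:
  fixes Pn :: "'a pmf" and \<phi> :: "'a \<Rightarrow> nat"
  assumes "finite S"
  shows "(\<Sum>w\<in>S. measure_pmf.prob Pn {x. \<phi> x = w}) \<le> 1"
proof -
  have "(\<Sum>w\<in>S. measure_pmf.prob Pn {x. \<phi> x = w}) = (\<Sum>w\<in>S. pmf (map_pmf \<phi> Pn) w)"
    by (simp add: pmf_map vimage_def)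
  also have "\<dots> = measure_pmf.prob (map_pmf \<phi> Pn) S"
    by (rule measure_measure_pmf_finite[symmetric]) (rule assms)
  also have "\<dots> \<le> 1" by (rule measure_pmf.prob_le_1)
  finally show ?thesis .
qed

lemma error_lower:
  assumes M: "M > 0"
  shows "error_prob K ps pd n M enc rel dec \<ge> 1 - 2 ^ n / real M"
proof -
  define Pn where "Pn = pair_pmf (noise K n ps) (noise K n pd)"
  define cw where "cw = (\<lambda>w t. if t < n then enc w t else False)"
  define Q where "Q = (\<lambda>c v. measure_pmf.prob Pn {ze. dec (dest_obs K n rel (\<lambda>_. c) 0 (fst ze) (snd ze)) = v})"
  define T where "T = PiE_dflt {..<n} False (\<lambda>_. UNIV::bool set)"
  have finT: "finite T" unfolding T_def by (intro finite_PiE_dflt) auto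
  have cardT: "card T = 2 ^ n" unfolding T_def by (subst card_PiE_dflt) auto
  have cwT: "cw ` {..<M} \<subseteq> T" by (auto simp: cw_def T_def PiE_dflt_def)
  have Pw: "measure_pmf.prob Pn {(z, e). dec (dest_obs K n rel enc w z e) \<noteq> w} = 1 - Q (cw w) w" for w
  proof -
    have "{(z, e). dec (dest_obs K n rel enc w z e) \<noteq> w} = UNIV - {ze. dec (dest_obs K n rel (\<lambda>_. cw w) 0 (fst ze) (snd ze)) = w}"
      by (auto simp: cw_def obs_trunc[of K n rel enc w])
    then show ?thesis
      using measure_pmf.prob_compl[of "{ze. dec (dest_obs K n rel (\<lambda>_. cw w) 0 (fst ze) (snd ze)) = w}" Pn]
      by (simp add: Q_def)
  qed
  have "(\<Sum>w<M. Q (cw w) w) = (\<Sum>c\<in>T. \<Sum>w\<in>{w. w \<in> {..<M} \<and> cw w = c}. Q (cw w) w)"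
    by (rule sum.group[symmetric, OF _ finT cwT]) simp
  also have "\<dots> = (\<Sum>c\<in>T. \<Sum>w\<in>{w. w \<in> {..<M} \<and> cw w = c}. Q c w)"
    by (intro sum.cong refl) auto
  also have "\<dots> \<le> (\<Sum>c\<in>T. 1)"
    unfolding Q_def by (intro sum_mono prob_sum_le1) auto
  finally have sQ: "(\<Sum>w<M. Q (cw w) w) \<le> 2 ^ n" using cardT by simp
  have "error_prob K ps pd n M enc rel dec = (\<Sum>w<M. 1 - Q (cw w) w) / real M"
    unfolding error_prob_def Pn_def[symmetric] using Pw by simp
  also have "\<dots> = 1 - (\<Sum>w<M. Q (cw w) w) / real M"
    using M by (simp add: sum_subtractf field_simps)
  finally show ?thesis using sQ M by (simp add: divide_right_mono)
qed

lemma converse: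
  assumes "achievable_with K ps pd UNIV R"
  shows "R \<le> 1"
proof (rule ccontr)
  assume "\<not> R \<le> 1"
  then have R: "R > 1" by simp
  obtain N where N: "\<And>n. n \<ge> N \<Longrightarrow> \<exists>enc rel dec. error_prob K ps pd n (nat \<lceil>2 powr (real n * R)\<rceil>) enc rel dec \<le> 1/4"
    using assms unfolding achievable_with_def by (meson UNIV_I zero_less_divide_1_iff zero_less_numeral)
  have lim: "(\<lambda>n. (2 powr (1 - R)) ^ n) \<longlonglongrightarrow> 0"
    using R by (intro LIMSEQ_power_zero) (simp add: powr_less_one)
  then have "eventually (\<lambda>n. (2 powr (1 - R)) ^ n < 1/2) sequentially"
    by (rule order_tendstoD) simp
  then obtain N2 where N2: "\<And>n. n \<ge> N2 \<Longrightarrow> (2 powr (1 - R)) ^ n < 1/2"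
    unfolding eventually_sequentially by blast
  define n where "n = max N N2"
  define M where "M = nat \<lceil>2 powr (real n * R)\<rceil>"
  have Mge: "real M \<ge> 2 powr (real n * R)" unfolding M_def by linarith
  have Mpos: "M > 0" unfolding M_def by simp
  obtain enc rel dec where e: "error_prob K ps pd n M enc rel dec \<le> 1/4"
    using N[of n] by (auto simp: n_def M_def)
  have "2 ^ n / real M \<le> 2 ^ n / 2 powr (real n * R)"
    using Mge Mpos by (intro divide_left_mono) auto
  also have "\<dots> = (2 powr (1 - R)) ^ n"
  proof -
    have "(2::real) ^ n = 2 powr (real n)" by (simp add: powr_realpow)
    moreover have "(2 powr (1 - R)) ^ n = 2 powr (real n * (1 - R))" by (simp add: powr_power mult.commute)
    ultimately show ?thesis by (simp add: powr_diff[symmetric] algebra_simps)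
  qed
  also have "\<dots> < 1/2" using N2 by (simp add: n_def)
  finally have "1 - 2 ^ n / real M > 1/2" by simp
  then show False using error_lower[OF Mpos, where K=K and ps=ps and pd=pd and n=n and enc=enc and rel=rel and dec=dec] e by simp
qed




lemma Eg_nonneg: "Eg K p \<rho> \<ge> 0"
  by (simp add: Eg_def sum_nonneg)

lemma code_bound:
  assumes p: "0 \<le> ps" "ps \<le> 1" "0 \<le> pd" "pd \<le> 1" and \<rho>: "0 < \<rho>" "\<rho> \<le> 1" and n: "n = Suc m"
  shows "\<exists>enc dec. error_prob K ps pd n (nat \<lceil>2 powr (real n * R)\<rceil>) enc fwd_relay dec
            \<le> 2 powr (\<rho> * R) * (Eg K (pdef ps pd) \<rho> * 2 powr (\<rho> * R)) ^ m"
proof -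
  define p where "p = pdef ps pd"
  have pp: "0 \<le> p" "p \<le> 1" using pdef_bounds[OF p] by (auto simp: p_def)
  define M where "M = nat \<lceil>2 powr (real n * R)\<rceil>"
  have Mpos: "M > 0" unfolding M_def by simp
  have Mle: "real (M - 1) \<le> 2 powr (real n * R)"
  proof -
    have "(0::real) < 2 powr (real n * R)" by simp
    then have "real M < 2 powr (real n * R) + 1" unfolding M_def by linarith
    then show ?thesis using Mpos by (simp add: of_nat_diff)
  qed
  define Bs where "Bs = {ys::bool list. length ys = K}"
  have finB: "finite Bs" unfolding Bs_def using finite_lists_length_eq[of "UNIV::bool set" K] by simp
  obtain C where C: "(\<Sum>w<M. \<Sum>g\<in>PiE {..<m} (\<lambda>_. Bs). Wm (Wch K p) m (C w) g * (if mldec (Wch K p) m M C g \<noteq> w then 1 else 0))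
          \<le> real M * real (M - 1) powr \<rho> * (\<Sum>y\<in>Bs. (\<Sum>x\<in>UNIV. 1/2 * Wch K p x y powr (1/(1+\<rho>))) powr (1+\<rho>)) ^ m"
    using gallager[where W="Wch K p" and B=Bs and \<rho>=\<rho> and M=M and m=m, OF Wch_nonneg[OF pp] finB \<rho> Mpos] by blast
  define dec where "dec = (\<lambda>obs. mldec (Wch K p) m M C (Gof K m obs))"
  have "error_prob K ps pd n M C fwd_relay dec
      = (\<Sum>w<M. \<Sum>g\<in>PiE {..<m} (\<lambda>_. Bs). Wm (Wch K p) m (C w) g * (if mldec (Wch K p) m M C g \<noteq> w then 1 else 0)) / real M"
  proof -
    have "measure_pmf.prob (pair_pmf (noise K n ps) (noise K n pd)) {(z, e). dec (dest_obs K n fwd_relay C w z e) \<noteq> w}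
       = (\<Sum>g\<in>PiE {..<m} (\<lambda>_. Bs). Wm (Wch K p) m (C w) g * (if mldec (Wch K p) m M C g \<noteq> w then 1 else 0))" for w
      unfolding dec_def Bs_def p_def
      by (rule network_prob[OF n p, where P="\<lambda>g. mldec (Wch K (pdef ps pd)) m M C g \<noteq> w"])
    then show ?thesis unfolding error_prob_def by simp
  qed
  also have "\<dots> \<le> real (M - 1) powr \<rho> * Eg K p \<rho> ^ m"
    using C Mpos by (simp add: divide_le_eq Eg_def Bs_def mult_ac)
  also have "\<dots> \<le> (2 powr (real n * R)) powr \<rho> * Eg K p \<rho> ^ m"
    using Mle \<rho> by (intro mult_right_mono powr_mono2) (auto simp: Eg_nonneg)
  also have "(2 powr (real n * R)) powr \<rho> = 2 powr (\<rho> * R) * (2 powr (\<rho> * R)) ^ m"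
  proof -
    have "(2 powr (real n * R)) powr \<rho> = 2 powr (\<rho> * R + real m * (\<rho> * R))"
      by (simp add: powr_powr n algebra_simps)
    also have "\<dots> = 2 powr (\<rho> * R) * (2 powr (\<rho> * R)) ^ m"
      by (simp add: powr_add powr_power mult.commute)
    finally show ?thesis .
  qed
  finally show ?thesis unfolding M_def p_def
    by (intro exI[of _ C] exI[of _ dec]) (simp add: power_mult_distrib mult_ac)
qed

lemma achievability:
  assumes p: "0 \<le> ps" "ps \<le> 1" "0 \<le> pd" "pd \<le> 1" and R: "R < R_coded_f K ps pd"
  shows "achievable_with K ps pd {fwd_relay} R"
  unfolding achievable_with_def
proof (intro allI impI)
  fix \<epsilon> :: real assume \<epsilon>: "\<epsilon> > 0"
  define p where "p = pdef ps pd"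
  have pp: "0 \<le> p" "p \<le> 1" using pdef_bounds[OF p] by (auto simp: p_def)
  have "R < Ifun K p" using R Rcf_eq[OF p] by (simp add: p_def)
  then obtain \<rho> where \<rho>: "0 < \<rho>" "\<rho> \<le> 1" "Eg K p \<rho> * 2 powr (\<rho> * R) < 1"
    using exists_rho[OF pp] by blast
  define F where "F = Eg K p \<rho> * 2 powr (\<rho> * R)"
  have F: "0 \<le> F" "F < 1" using \<rho> by (auto simp: F_def Eg_nonneg)
  have "(\<lambda>k. 2 powr (\<rho> * R) * F ^ k) \<longlonglongrightarrow> 2 powr (\<rho> * R) * 0"
    using F by (intro tendsto_mult tendsto_const LIMSEQ_power_zero) simp
  then have "eventually (\<lambda>k. 2 powr (\<rho> * R) * F ^ k < \<epsilon>) sequentially"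
    using \<epsilon> by (intro order_tendstoD) simp_all
  then obtain N where N: "\<And>k. k \<ge> N \<Longrightarrow> 2 powr (\<rho> * R) * F ^ k < \<epsilon>"
    unfolding eventually_sequentially by blast
  show "\<exists>N. \<forall>n\<ge>N. \<exists>enc rel dec. rel \<in> {fwd_relay} \<and> error_prob K ps pd n (nat \<lceil>2 powr (real n * R)\<rceil>) enc rel dec \<le> \<epsilon>"
  proof (intro exI[of _ "Suc N"] allI impI)
    fix n assume n: "n \<ge> Suc N"
    then obtain m where m: "n = Suc m" "m \<ge> N" by (cases n) auto
    obtain enc dec where ed: "error_prob K ps pd n (nat \<lceil>2 powr (real n * R)\<rceil>) enc fwd_relay dec \<le> 2 powr (\<rho> * R) * F ^ m"
      using code_bound[OF p \<rho>(1,2) m(1), of K R] by (auto simp: F_def p_def)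
    then show "\<exists>enc rel dec. rel \<in> {fwd_relay} \<and> error_prob K ps pd n (nat \<lceil>2 powr (real n * R)\<rceil>) enc rel dec \<le> \<epsilon>"
    proof (intro exI[of _ enc] exI[of _ fwd_relay] exI[of _ dec] conjI)
      show "error_prob K ps pd n (nat \<lceil>2 powr (real n * R)\<rceil>) enc fwd_relay dec \<le> \<epsilon>"
        using ed N[OF m(2)] by linarith
    qed simp
  qed
qed




lemma achievable_mono: "achievable_with K ps pd {fwd_relay} R \<Longrightarrow> achievable_with K ps pd UNIV R"
  unfolding achievable_with_def by (meson UNIV_I)

theorem theorem9:
  fixes ps pd :: real
  assumes "0 \<le> ps" and "ps < 1/2" and "0 \<le> pd" and "pd < 1/2"
  shows "(\<forall>K R. R < R_coded_f K ps pd \<longrightarrow> achievable_with K ps pd {fwd_relay} R)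
       \<and> (\<lambda>K. R_coded_f K ps pd - capacity K ps pd) \<longlonglongrightarrow> 0"
proof -
  have p: "0 \<le> ps" "ps \<le> 1" "0 \<le> pd" "pd \<le> 1" using assms by auto
  have A: "\<forall>K R. R < R_coded_f K ps pd \<longrightarrow> achievable_with K ps pd {fwd_relay} R"
    using achievability[OF p] by blast
  define p0 where "p0 = pdef ps pd"
  have pp: "0 \<le> p0" "p0 \<le> 1" using pdef_bounds[OF p] by (auto simp: p0_def)
  have phalf: "p0 < 1/2"
  proof -
    have "1/2 - p0 = 2 * ((1/2 - ps) * (1/2 - pd))" by (simp add: p0_def pdef_def algebra_simps)
    moreover have "(1/2 - ps) * (1/2 - pd) > 0" using assms by simp
    ultimately show ?thesis by simp
  qed
  define \<beta> where "\<beta> = 2 * sqrt (p0 * (1 - p0))"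
  have \<beta>: "0 \<le> \<beta>" "\<beta> < 1"
  proof -
    show "0 \<le> \<beta>" using pp by (simp add: \<beta>_def)
    have "p0 * (1 - p0) < 1/4"
    proof -
      have "1/4 - p0 * (1 - p0) = (1/2 - p0)^2" by (simp add: power2_eq_square algebra_simps)
      moreover have "(1/2 - p0)^2 > 0" using phalf by simp
      ultimately show ?thesis by linarith
    qed
    then have "sqrt (p0 * (1 - p0)) < sqrt (1/4)" by (simp only: real_sqrt_less_iff)
    also have "sqrt (1/4) = (1/2::real)" by (simp add: real_sqrt_divide)
    finally show "\<beta> < 1" by (simp add: \<beta>_def)
  qed
  have bounds: "- (2 / ln 2 * \<beta> ^ K) \<le> R_coded_f K ps pd - capacity K ps pd \<and> R_coded_f K ps pd - capacity K ps pd \<le> 0" for K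
  proof -
    define S where "S = {R. achievable_with K ps pd UNIV R}"
    have bdd: "bdd_above S" unfolding S_def by (auto intro!: bdd_aboveI[of _ 1] converse)
    have inS: "R < R_coded_f K ps pd \<Longrightarrow> R \<in> S" for R
      unfolding S_def using A achievable_mono by blast
    have ne: "S \<noteq> {}" using inS[of "R_coded_f K ps pd - 1"] by auto
    have le1: "capacity K ps pd \<le> 1"
      unfolding capacity_def S_def[symmetric] using ne by (intro cSup_least) (auto simp: S_def converse)
    have ge: "R_coded_f K ps pd \<le> capacity K ps pd"
      unfolding capacity_def S_def[symmetric]
    proof (rule dense_le)
      fix R assume "R < R_coded_f K ps pd"
      then show "R \<le> Sup S" using bdd inS by (intro cSup_upper) auto
    qed
    have "1 - R_coded_f K ps pd \<le> 2 / ln 2 * \<beta> ^ K"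
      using Ifun_lower[OF pp, of K] Rcf_eq[OF p, of K] by (simp add: \<beta>_def p0_def)
    then show ?thesis using le1 ge by linarith
  qed
  have lim0: "(\<lambda>K. - (2 / ln 2 * \<beta> ^ K)) \<longlonglongrightarrow> 0"
  proof -
    have "(\<lambda>K. - (2 / ln 2 * \<beta> ^ K)) \<longlonglongrightarrow> - (2 / ln 2 * 0)"
      using \<beta> by (intro tendsto_minus tendsto_mult tendsto_const LIMSEQ_power_zero) simp
    then show ?thesis by simp
  qed
  have "(\<lambda>K. R_coded_f K ps pd - capacity K ps pd) \<longlonglongrightarrow> 0"
    by (rule tendsto_sandwich[OF _ _ lim0 tendsto_const]) (use bounds in auto)
  with A show ?thesis by blast
qed


end
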